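(* Let $m\ge 2$ and let $\mathcal{H}$ be the incidence structure produced by the Construction described in the context (from a projective plane $\mathcal{P}$ of order $m$, affine planes $\mathcal{A}_P$ of order $m$ for each point $P$ of $\mathcal{P}$, orthogonal arrays $\mathcal{O}_l=OA(2,m+1,m)$ for each line $l$ of $\mathcal{P}$, and admissible choices $\pi$ and $\beta$). Then $\mathcal{H}$ is a $2$-uniform $(m,m)$PH-plane.
   Context: An orthogonal array $OA(2,k,v)$ is a $v^2\times k$ array with entries from a $v$-element symbol set such that in any two columns every ordered pair of symbols occurs in exactly one row. A projective plane of order $m$ has $m+1$ points on each line and $m+1$ lines through each point; an affine plane of order $m$ has $m^2$ points, $m$ points per line, and its lines split into $m+1$ parallel classes, each consisting of $m$ pairwise disjoint lines covering all points. Construction (Algorithm 1). Let $\mathcal{P}$ be a projective plane of order $m$. For each point $P$ of $\mathcal{P}$ let $\mathcal{A}_P$ be an affine plane of order $m$ (not necessarily all the same). For each line $l$ of $\mathcal{P}$ let $\mathcal{O}_l$ be an $OA(2,m+1,m)$ on a symbol set $\Sigma_l$ whose $m+1$ columns are labelled bijectively by the $m+1$ points of $l$. For each incident pair $P\in l$ choose a parallel class $\pi(P,l)$ of $\mathcal{A}_P$ such that, for each fixed $P$, the map $l\mapsto\pi(P,l)$ is a bijection from the $m+1$ lines of $\mathcal{P}$ through $P$ to the $m+1$ parallel classes of $\mathcal{A}_P$; and choose a bijection $\beta_{P,l}$ from $\Sigma_l$ to the $m$ lines of $\pi(P,l)$. The points of $\mathcal{H}$ are the pairs $(P,x)$ with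 $P$ a point of $\mathcal{P}$ and $x$ a point of $\mathcal{A}_P$. For each line $l$ of $\mathcal{P}$ and each row $r$ of $\mathcal{O}_l$, $\mathcal{H}$ has the line $\bigcup_{P\in l}\{(P,x): x\in \beta_{P,l}(\mathcal{O}_l(r,P))\}$, where $\mathcal{O}_l(r,P)$ is the entry of $\mathcal{O}_l$ in row $r$ and the column labelled $P$. Incidence is membership. Projective Hjelmslev plane: an incidence structure $\mathcal{H}$ such that (1) any two points are incident with at least one line; (2) any two lines meet in at least one point; (3) two lines meeting in more than one point are called neighbours; (4) two points incident with more than one common line are called neighbours; (5) there is an incidence-preserving surjection $\phi$ from $\mathcal{H}$ onto an ordinary projective plane with $\phi(P)=\phi(Q)\iff P\sim Q$ for points and $\phi(g)=\phi(h)\iff g\sim h$ for lines (where $\sim$ is the neighbour relation, reflexively extended; it is an equivalence relation). A $(t,r)$PH-plane is a projective Hjelmslev plane in which each line has $t(r+1)$ points and, for each point $P$ on a line $g$, exactly $t$ points of $g$ are neighbours of $P$ (including $P$); then the image projective plane has order $r$. Affine Hjelmslev plane: an incidence structure such that any two points are incident with at least one line, lines meeting in more than one point are neighbours, and there is an incidence-preserving surjection $\phi$ onto an ordinary affine plane with $\phi(P)=\phi(Q)\iff P\sim Q$, $\phi(g)=\phi(h)\iff g\sim h$, and lines with no common point mapped to parallel lines. Uniformity: a $1$-uniform projective (resp. affine) Hjelmslev plane is an ordinary projective (resp. affine) plane. For a point $P$, the point-neighbourhood restriction $\bar P$ is the incidence structure whose points are the points $Q\sim P$ and whose lines are the nonempty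 sets $g\cap\bar P$ for lines $g$ of $\mathcal{H}$. A projective (resp. affine) Hjelmslev plane is $n$-uniform if for every point $P$, $\bar P$ is an $(n-1)$-uniform affine Hjelmslev plane, and every line of $\bar P$ is the restriction of the same number of lines of $\mathcal{H}$. *)

theory Defs
  imports Main
begin

definition projective_plane :: "'a set \<Rightarrow> 'b set \<Rightarrow> ('a \<Rightarrow> 'b \<Rightarrow> bool) \<Rightarrow> bool" where
  "projective_plane P L inc \<longleftrightarrow>
     (\<forall>p\<in>P. \<forall>q\<in>P. p \<noteq> q \<longrightarrow> (\<exists>!l. l \<in> L \<and> inc p l \<and> inc q l)) \<and>
     (\<forall>l\<in>L. \<forall>k\<in>L. l \<noteq> k \<longrightarrow> (\<exists>!p. p \<in> P \<and> inc p l \<and> inc p k)) \<and>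
     (\<exists>a\<in>P. \<exists>b\<in>P. \<exists>c\<in>P. \<exists>d\<in>P. distinct [a,b,c,d] \<and>
        (\<forall>l\<in>L. \<not> (inc a l \<and> inc b l \<and> inc c l)) \<and>
        (\<forall>l\<in>L. \<not> (inc a l \<and> inc b l \<and> inc d l)) \<and>
        (\<forall>l\<in>L. \<not> (inc a l \<and> inc c l \<and> inc d l)) \<and>
        (\<forall>l\<in>L. \<not> (inc b l \<and> inc c l \<and> inc d l)))"

definition projective_plane_of_order :: "'a set \<Rightarrow> 'b set \<Rightarrow> ('a \<Rightarrow> 'b \<Rightarrow> bool) \<Rightarrow> nat \<Rightarrow> bool" where
  "projective_plane_of_order P L inc m \<longleftrightarrow>
     projective_plane P L inc \<and>
     (\<forall>l\<in>L. card {p\<in>P. inc p l} = m + 1) \<and>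
     (\<forall>p\<in>P. card {l\<in>L. inc p l} = m + 1)"

definition parallel_lines :: "'a set \<Rightarrow> ('a \<Rightarrow> 'b \<Rightarrow> bool) \<Rightarrow> 'b \<Rightarrow> 'b \<Rightarrow> bool" where
  "parallel_lines P inc l k \<longleftrightarrow> l = k \<or> \<not> (\<exists>p\<in>P. inc p l \<and> inc p k)"

definition affine_plane :: "'a set \<Rightarrow> 'b set \<Rightarrow> ('a \<Rightarrow> 'b \<Rightarrow> bool) \<Rightarrow> bool" where
  "affine_plane P L inc \<longleftrightarrow>
     (\<forall>p\<in>P. \<forall>q\<in>P. p \<noteq> q \<longrightarrow> (\<exists>!l. l \<in> L \<and> inc p l \<and> inc q l)) \<and>
     (\<forall>l\<in>L. \<forall>p\<in>P. \<not> inc p l \<longrightarrow>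
        (\<exists>!k. k \<in> L \<and> inc p k \<and> \<not> (\<exists>q\<in>P. inc q l \<and> inc q k))) \<and>
     (\<exists>a\<in>P. \<exists>b\<in>P. \<exists>c\<in>P. \<forall>l\<in>L. \<not> (inc a l \<and> inc b l \<and> inc c l))"

definition affine_plane_of_order :: "'x set \<Rightarrow> 'x set set \<Rightarrow> nat \<Rightarrow> bool" where
  "affine_plane_of_order X L m \<longleftrightarrow>
     affine_plane X L (\<in>) \<and> (\<forall>g\<in>L. g \<subseteq> X) \<and>
     card X = m^2 \<and> (\<forall>g\<in>L. card g = m)"

definition parallel_classes :: "'x set \<Rightarrow> 'x set set \<Rightarrow> 'x set set set" where
  "parallel_classes X L =
     {C. C \<subseteq> L \<and> (\<forall>g\<in>C. \<forall>h\<in>C. g \<noteq> h \<longrightarrow> g \<inter> h = {}) \<and> \<Union>C = X}"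

text \<open>Rows indexed by R, columns by C (so k = card C), symbols S, entries A r c.\<close>
definition OA2 :: "'r set \<Rightarrow> 'c set \<Rightarrow> 's set \<Rightarrow> ('r \<Rightarrow> 'c \<Rightarrow> 's) \<Rightarrow> nat \<Rightarrow> bool" where
  "OA2 R C S A v \<longleftrightarrow>
     finite R \<and> card R = v^2 \<and> card S = v \<and>
     (\<forall>r\<in>R. \<forall>c\<in>C. A r c \<in> S) \<and>
     (\<forall>c1\<in>C. \<forall>c2\<in>C. c1 \<noteq> c2 \<longrightarrow>
        (\<forall>s1\<in>S. \<forall>s2\<in>S. \<exists>!r. r \<in> R \<and> A r c1 = s1 \<and> A r c2 = s2))"

definition H_points :: "'a set \<Rightarrow> ('a \<Rightarrow> 'x set) \<Rightarrow> ('a \<times> 'x) set" where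
  "H_points Pts X = {(P, x). P \<in> Pts \<and> x \<in> X P}"

definition H_line :: "'a set \<Rightarrow> ('a \<Rightarrow> 'b \<Rightarrow> bool) \<Rightarrow> ('a \<Rightarrow> 'b \<Rightarrow> 's \<Rightarrow> 'x set)
    \<Rightarrow> ('b \<Rightarrow> 'r \<Rightarrow> 'a \<Rightarrow> 's) \<Rightarrow> 'b \<Rightarrow> 'r \<Rightarrow> ('a \<times> 'x) set" where
  "H_line Pts inc \<beta> Arr l r = {(P, x). P \<in> Pts \<and> inc P l \<and> x \<in> \<beta> P l (Arr l r P)}"

definition H_lines :: "'a set \<Rightarrow> 'b set \<Rightarrow> ('a \<Rightarrow> 'b \<Rightarrow> bool) \<Rightarrow> ('b \<Rightarrow> 'r set)
    \<Rightarrow> ('a \<Rightarrow> 'b \<Rightarrow> 's \<Rightarrow> 'x set) \<Rightarrow> ('b \<Rightarrow> 'r \<Rightarrow> 'a \<Rightarrow> 's) \<Rightarrow> ('a \<times> 'x) set set" where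
  "H_lines Pts Lns inc R \<beta> Arr = {H_line Pts inc \<beta> Arr l r | l r. l \<in> Lns \<and> r \<in> R l}"

definition pt_nb :: "'p set set \<Rightarrow> 'p \<Rightarrow> 'p \<Rightarrow> bool" where
  "pt_nb L p q \<longleftrightarrow> p = q \<or> (\<exists>g\<in>L. \<exists>h\<in>L. g \<noteq> h \<and> p \<in> g \<and> q \<in> g \<and> p \<in> h \<and> q \<in> h)"

definition ln_nb :: "'p set \<Rightarrow> 'p set \<Rightarrow> bool" where
  "ln_nb g h \<longleftrightarrow> g = h \<or> (\<exists>p q. p \<noteq> q \<and> p \<in> g \<and> q \<in> g \<and> p \<in> h \<and> q \<in> h)"

text \<open>The image plane is taken with point type 'p and line type 'p set; this is
  no loss of generality, since image points (lines) correspond bijectively to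
  neighbour classes of points (lines), which inject into 'p ('p set).\<close>
definition PH_plane :: "'p set \<Rightarrow> 'p set set \<Rightarrow> bool" where
  "PH_plane X L \<longleftrightarrow>
     (\<forall>g\<in>L. g \<subseteq> X) \<and>
     (\<forall>p\<in>X. \<forall>q\<in>X. \<exists>g\<in>L. p \<in> g \<and> q \<in> g) \<and>
     (\<forall>g\<in>L. \<forall>h\<in>L. g \<inter> h \<noteq> {}) \<and>
     (\<exists>(X' :: 'p set) (L' :: 'p set set) (inc' :: 'p \<Rightarrow> 'p set \<Rightarrow> bool)
        (\<phi> :: 'p \<Rightarrow> 'p) (\<psi> :: 'p set \<Rightarrow> 'p set).
        projective_plane X' L' inc' \<and> \<phi> ` X = X' \<and> \<psi> ` L = L' \<and>
        (\<forall>p\<in>X. \<forall>g\<in>L. p \<in> g \<longrightarrow> inc' (\<phi> p) (\<psi> g)) \<and>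
        (\<forall>p\<in>X. \<forall>q\<in>X. \<phi> p = \<phi> q \<longleftrightarrow> pt_nb L p q) \<and>
        (\<forall>g\<in>L. \<forall>h\<in>L. \<psi> g = \<psi> h \<longleftrightarrow> ln_nb g h))"

definition tr_PH_plane :: "'p set \<Rightarrow> 'p set set \<Rightarrow> nat \<Rightarrow> nat \<Rightarrow> bool" where
  "tr_PH_plane X L t r \<longleftrightarrow>
     PH_plane X L \<and>
     (\<forall>g\<in>L. finite g \<and> card g = t * (r + 1)) \<and>
     (\<forall>g\<in>L. \<forall>p\<in>g. card {q\<in>g. pt_nb L p q} = t)"

definition AH_plane :: "'p set \<Rightarrow> 'p set set \<Rightarrow> bool" where
  "AH_plane X L \<longleftrightarrow>
     (\<forall>g\<in>L. g \<subseteq> X) \<and>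
     (\<forall>p\<in>X. \<forall>q\<in>X. \<exists>g\<in>L. p \<in> g \<and> q \<in> g) \<and>
     (\<exists>(X' :: 'p set) (L' :: 'p set set) (inc' :: 'p \<Rightarrow> 'p set \<Rightarrow> bool)
        (\<phi> :: 'p \<Rightarrow> 'p) (\<psi> :: 'p set \<Rightarrow> 'p set).
        affine_plane X' L' inc' \<and> \<phi> ` X = X' \<and> \<psi> ` L = L' \<and>
        (\<forall>p\<in>X. \<forall>g\<in>L. p \<in> g \<longrightarrow> inc' (\<phi> p) (\<psi> g)) \<and>
        (\<forall>p\<in>X. \<forall>q\<in>X. \<phi> p = \<phi> q \<longleftrightarrow> pt_nb L p q) \<and>
        (\<forall>g\<in>L. \<forall>h\<in>L. \<psi> g = \<psi> h \<longleftrightarrow> ln_nb g h) \<and>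
        (\<forall>g\<in>L. \<forall>h\<in>L. g \<inter> h = {} \<longrightarrow> parallel_lines X' inc' (\<psi> g) (\<psi> h)))"

definition nbhd_pts :: "'p set \<Rightarrow> 'p set set \<Rightarrow> 'p \<Rightarrow> 'p set" where
  "nbhd_pts X L p = {q\<in>X. pt_nb L p q}"

definition nbhd_lines :: "'p set \<Rightarrow> 'p set set \<Rightarrow> 'p \<Rightarrow> 'p set set" where
  "nbhd_lines X L p = {g \<inter> nbhd_pts X L p | g. g \<in> L \<and> g \<inter> nbhd_pts X L p \<noteq> {}}"

definition restriction_count_const :: "'p set \<Rightarrow> 'p set set \<Rightarrow> 'p \<Rightarrow> bool" where
  "restriction_count_const X L p \<longleftrightarrow>
     (\<exists>c. \<forall>g'\<in>nbhd_lines X L p. card {g\<in>L. g \<inter> nbhd_pts X L p = g'} = c)"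

fun uniform_AH :: "nat \<Rightarrow> 'p set \<Rightarrow> 'p set set \<Rightarrow> bool" where
  "uniform_AH 0 X L = False"
| "uniform_AH (Suc 0) X L = ((\<forall>g\<in>L. g \<subseteq> X) \<and> affine_plane X L (\<in>))"
| "uniform_AH (Suc (Suc n)) X L =
     (AH_plane X L \<and>
      (\<forall>p\<in>X. uniform_AH (Suc n) (nbhd_pts X L p) (nbhd_lines X L p) \<and>
              restriction_count_const X L p))"

fun uniform_PH :: "nat \<Rightarrow> 'p set \<Rightarrow> 'p set set \<Rightarrow> bool" where
  "uniform_PH 0 X L = False"
| "uniform_PH (Suc 0) X L = ((\<forall>g\<in>L. g \<subseteq> X) \<and> projective_plane X L (\<in>))"
| "uniform_PH (Suc (Suc n)) X L =
     (PH_plane X L \<and>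
      (\<forall>p\<in>X. uniform_AH (Suc n) (nbhd_pts X L p) (nbhd_lines X L p) \<and>
              restriction_count_const X L p))"

end

theory Submission
  imports Defs
begin

lemma ex1_eq: "\<exists>!x. P x \<Longrightarrow> P a \<Longrightarrow> P b \<Longrightarrow> a = b" by blast

locale aff =
  fixes Y :: "'x set" and AY :: "'x set set" and m :: nat
  assumes ord: "affine_plane_of_order Y AY m" and m2: "m \<ge> 2"
begin

lemma ap: "affine_plane Y AY (\<in>)" using ord by (simp add: affine_plane_of_order_def)
lemma sub: "g \<in> AY \<Longrightarrow> g \<subseteq> Y" using ord by (simp add: affine_plane_of_order_def)
lemma cardl: "g \<in> AY \<Longrightarrow> card g = m" using ord by (simp add: affine_plane_of_order_def)
lemma cardY: "card Y = m^2" using ord by (simp add: affine_plane_of_order_def)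
lemma finl: "g \<in> AY \<Longrightarrow> finite g" using cardl m2 by (metis card.infinite not_numeral_le_zero)
lemma nonempty: "g \<in> AY \<Longrightarrow> g \<noteq> {}" using cardl m2 by fastforce
lemma finY: "finite Y" using cardY m2
  by (metis card.infinite not_numeral_le_zero power_eq_0_iff zero_neq_numeral)
lemma Yne: "Y \<noteq> {}" using cardY m2 by (metis card.empty not_numeral_le_zero power_eq_0_iff)

lemma ap1: "\<forall>p\<in>Y. \<forall>q\<in>Y. p \<noteq> q \<longrightarrow> (\<exists>!l. l \<in> AY \<and> p \<in> l \<and> q \<in> l)"
  using ap unfolding affine_plane_def by (rule conjunct1)
lemma ap2: "\<forall>l\<in>AY. \<forall>p\<in>Y. \<not> p \<in> l \<longrightarrow>
        (\<exists>!k. k \<in> AY \<and> p \<in> k \<and> \<not> (\<exists>q\<in>Y. q \<in> l \<and> q \<in> k))"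
  using ap unfolding affine_plane_def by (rule conjunct1[OF conjunct2])
lemma ap3: "\<exists>a\<in>Y. \<exists>b\<in>Y. \<exists>c\<in>Y. \<forall>l\<in>AY. \<not> (a \<in> l \<and> b \<in> l \<and> c \<in> l)"
  using ap unfolding affine_plane_def by (rule conjunct2[OF conjunct2])

lemma join: "x\<in>Y \<Longrightarrow> y\<in>Y \<Longrightarrow> x\<noteq>y \<Longrightarrow> \<exists>!g. g\<in>AY \<and> x\<in>g \<and> y\<in>g"
  using ap1 by simp

lemma join_uniq: "x\<in>Y \<Longrightarrow> y\<in>Y \<Longrightarrow> x\<noteq>y \<Longrightarrow> g\<in>AY \<Longrightarrow> h\<in>AY \<Longrightarrow>
   x\<in>g \<Longrightarrow> y\<in>g \<Longrightarrow> x\<in>h \<Longrightarrow> y\<in>h \<Longrightarrow> g = h"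
  using ex1_eq[OF join, of x y g h] by blast

lemma two_pts: "g \<in> AY \<Longrightarrow> \<exists>x y. x \<in> g \<and> y \<in> g \<and> x \<noteq> y"
proof -
  assume g: "g \<in> AY"
  have "card g \<ge> 2" using cardl[OF g] m2 by simp
  then have "\<not> card g \<le> Suc 0" by simp
  then show ?thesis using card_le_Suc0_iff_eq[OF finl[OF g]] by blast
qed

lemma parax: "g\<in>AY \<Longrightarrow> p\<in>Y \<Longrightarrow> p\<notin>g \<Longrightarrow> \<exists>!k. k\<in>AY \<and> p\<in>k \<and> g \<inter> k = {}"
proof -
  assume a: "g\<in>AY" "p\<in>Y" "p\<notin>g"
  have "\<exists>!k. k\<in>AY \<and> p\<in>k \<and> \<not>(\<exists>q\<in>Y. q\<in>g \<and> q\<in>k)"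
    using mp[OF bspec[OF bspec[OF ap2 a(1)] a(2)] a(3)] .
  moreover have "\<And>k. (\<not>(\<exists>q\<in>Y. q\<in>g \<and> q\<in>k)) = (g \<inter> k = {})" using sub[OF a(1)] by blast
  ultimately show ?thesis by simp
qed

definition par where "par g = {h\<in>AY. h = g \<or> g \<inter> h = {}}"

lemma par_class: "g\<in>AY \<Longrightarrow> par g \<in> parallel_classes Y AY"
proof -
  assume g: "g \<in> AY"
  have 1: "par g \<subseteq> AY" unfolding par_def by blast
  have 2: "\<forall>h\<in>par g. \<forall>k\<in>par g. h \<noteq> k \<longrightarrow> h \<inter> k = {}"
  proof (intro ballI impI)
    fix h k assume h: "h \<in> par g" and k: "k \<in> par g" and hk: "h \<noteq> k"
    show "h \<inter> k = {}"
    proof (rule ccontr)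
      assume "h \<inter> k \<noteq> {}"
      then obtain p where p: "p \<in> h" "p \<in> k" by blast
      show False
      proof (cases "h = g \<or> k = g")
        case True then show False using h k hk p unfolding par_def by blast
      next
        case False
        then have d: "g \<inter> h = {}" "g \<inter> k = {}" using h k unfolding par_def by auto
        have "p \<in> Y" using p h sub unfolding par_def by blast
        moreover have "p \<notin> g" using d p by blast
        ultimately have "\<exists>!k. k\<in>AY \<and> p\<in>k \<and> g \<inter> k = {}" using parax[OF g] by blast
        then show False using h k hk p d unfolding par_def by blast
      qed
    qed
  qed
  have 3: "\<Union>(par g) = Y"
  proof
    show "\<Union>(par g) \<subseteq> Y" using sub unfolding par_def by blast
    show "Y \<subseteq> \<Union>(par g)"
    proof
      fix p assume p: "p \<in> Y"
      show "p \<in> \<Union>(par g)"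
      proof (cases "p \<in> g")
        case True then show ?thesis using g unfolding par_def by blast
      next
        case False
        then obtain k where "k\<in>AY" "p\<in>k" "g \<inter> k = {}" using parax[OF g p] by blast
        then have "k \<in> par g" unfolding par_def by blast
        then show ?thesis using \<open>p\<in>k\<close> by blast
      qed
    qed
  qed
  show ?thesis unfolding parallel_classes_def using 1 2 3 by (intro CollectI conjI)
qed

lemma class_sub: "C \<in> parallel_classes Y AY \<Longrightarrow> C \<subseteq> AY"
  unfolding parallel_classes_def by blast

lemma class_disj: "C \<in> parallel_classes Y AY \<Longrightarrow> g\<in>C \<Longrightarrow> h\<in>C \<Longrightarrow> g\<noteq>h \<Longrightarrow> g\<inter>h={}"
  unfolding parallel_classes_def by blast

lemma class_eq: "C \<in> parallel_classes Y AY \<Longrightarrow> g \<in> C \<Longrightarrow> C = par g"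
proof -
  assume C: "C \<in> parallel_classes Y AY" and g: "g \<in> C"
  have gA: "g \<in> AY" using C g class_sub by blast
  show "C = par g"
  proof
    show "C \<subseteq> par g" using class_disj[OF C g] class_sub[OF C] unfolding par_def by blast
    show "par g \<subseteq> C"
    proof
      fix k assume k: "k \<in> par g"
      show "k \<in> C"
      proof (cases "k = g")
        case True then show ?thesis using g by simp
      next
        case False
        then have kA: "k \<in> AY" and d: "g \<inter> k = {}" using k unfolding par_def by auto
        obtain p where p: "p \<in> k" using nonempty[OF kA] by blast
        have pY: "p \<in> Y" using p sub[OF kA] by blast
        then obtain h where h: "h \<in> C" "p \<in> h" using C unfolding parallel_classes_def by blast
        have hg: "h \<noteq> g" using h d p by blast
        have hA: "h \<in> AY" using h C class_sub by blast
        have dh: "g \<inter> h = {}" using class_disj[OF C g h(1)] hg by blast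
        have pg: "p \<notin> g" using d p by blast
        have "h = k" using parax[OF gA pY pg] hA h(2) dh kA p d by blast
        then show ?thesis using h by simp
      qed
    qed
  qed
qed

lemma in_par: "g \<in> AY \<Longrightarrow> g \<in> par g" unfolding par_def by simp

lemma in_class: "g \<in> AY \<Longrightarrow> \<exists>C \<in> parallel_classes Y AY. g \<in> C"
  using par_class in_par by blast

lemma meet1:
  assumes C1: "C1 \<in> parallel_classes Y AY" and C2: "C2 \<in> parallel_classes Y AY"
    and ne: "C1 \<noteq> C2" and g: "g \<in> C1" and h: "h \<in> C2"
  shows "\<exists>!x. x\<in>g \<and> x\<in>h"
proof -
  have gA: "g \<in> AY" and hA: "h \<in> AY" using C1 C2 g h class_sub by blast+
  have e1: "C1 = par g" using class_eq C1 g by blast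
  have e2: "C2 = par h" using class_eq C2 h by blast
  have "g \<inter> h \<noteq> {}"
  proof
    assume "g \<inter> h = {}"
    then have "h \<in> C1" using e1 hA unfolding par_def by blast
    then have "C1 = par h" using class_eq C1 by blast
    then show False using e2 ne by simp
  qed
  then obtain x where x: "x \<in> g" "x \<in> h" by blast
  have "g \<noteq> h" using ne e1 e2 by blast
  moreover have "\<And>y. y \<in> g \<Longrightarrow> y \<in> h \<Longrightarrow> y = x"
  proof (rule ccontr)
    fix y assume y: "y \<in> g" "y \<in> h" "y \<noteq> x"
    have xY: "x \<in> Y" and yY: "y \<in> Y" using x y sub[OF gA] by blast+
    have "g = h" using join_uniq[OF xY yY _ gA hA] x y by metis
    then show False using \<open>g \<noteq> h\<close> by blast
  qed
  ultimately show ?thesis using x by blast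
qed

lemma parax_uniq: "g\<in>AY \<Longrightarrow> p\<in>Y \<Longrightarrow> p\<notin>g \<Longrightarrow> k\<in>AY \<Longrightarrow> k'\<in>AY \<Longrightarrow> p\<in>k \<Longrightarrow> p\<in>k'
   \<Longrightarrow> g \<inter> k = {} \<Longrightarrow> g \<inter> k' = {} \<Longrightarrow> k = k'"
  using ex1_eq[OF parax, of g p k k'] by blast

lemma image_affine:
  fixes f :: "'x \<Rightarrow> 'y"
  assumes inj: "inj f"
  shows "affine_plane (f ` Y) ((`) f ` AY) (\<in>)"
proof -
  have mem: "\<And>y g. (f y \<in> f ` g) = (y \<in> g)" using inj by (simp add: inj_image_mem_iff)
  have A1: "\<forall>p\<in>f`Y. \<forall>q\<in>f`Y. p \<noteq> q \<longrightarrow> (\<exists>!l. l \<in> (`) f ` AY \<and> p \<in> l \<and> q \<in> l)"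
  proof (intro ballI impI)
    fix p q assume p: "p \<in> f`Y" and q: "q \<in> f`Y" and pq: "p \<noteq> q"
    obtain x where x: "x \<in> Y" "p = f x" using p by blast
    obtain y where y: "y \<in> Y" "q = f y" using q by blast
    have xy: "x \<noteq> y" using pq x y by blast
    obtain g where g: "g\<in>AY" "x\<in>g" "y\<in>g" using ex1_implies_ex[OF join[OF x(1) y(1) xy]] by blast
    show "\<exists>!l. l \<in> (`) f ` AY \<and> p \<in> l \<and> q \<in> l"
    proof (rule ex1I[of _ "f ` g"])
      show "f ` g \<in> (`) f ` AY \<and> p \<in> f ` g \<and> q \<in> f ` g" using g x(2) y(2) by blast
      fix l assume l: "l \<in> (`) f ` AY \<and> p \<in> l \<and> q \<in> l"
      then obtain h where h: "h \<in> AY" "l = f ` h" by blast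
      have "x \<in> h" using l h(2) x(2) mem by simp
      moreover have "y \<in> h" using l h(2) y(2) mem by simp
      ultimately have "h = g" using join_uniq[OF x(1) y(1) xy h(1) g(1)] g by blast
      then show "l = f ` g" using h(2) by simp
    qed
  qed
  have A2: "\<forall>l\<in>(`) f ` AY. \<forall>p\<in>f`Y. \<not> p \<in> l \<longrightarrow>
        (\<exists>!k. k \<in> (`) f ` AY \<and> p \<in> k \<and> \<not> (\<exists>q\<in>f`Y. q \<in> l \<and> q \<in> k))"
  proof (intro ballI impI)
    fix l p assume l: "l \<in> (`) f ` AY" and p: "p \<in> f`Y" and pl: "p \<notin> l"
    obtain g where g: "g \<in> AY" "l = f ` g" using l by blast
    obtain x where x: "x \<in> Y" "p = f x" using p by blast
    have xg: "x \<notin> g" using pl g(2) x(2) mem by simp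
    have dis: "\<And>h. h \<in> AY \<Longrightarrow> (\<not> (\<exists>q\<in>f`Y. q \<in> f ` g \<and> q \<in> f ` h)) = (g \<inter> h = {})"
    proof -
      fix h assume h: "h \<in> AY"
      show "(\<not> (\<exists>q\<in>f`Y. q \<in> f ` g \<and> q \<in> f ` h)) = (g \<inter> h = {})"
      proof
        assume a: "\<not> (\<exists>q\<in>f`Y. q \<in> f ` g \<and> q \<in> f ` h)"
        show "g \<inter> h = {}"
        proof (rule ccontr)
          assume "g \<inter> h \<noteq> {}"
          then obtain z where "z \<in> g" "z \<in> h" by blast
          then have "f z \<in> f`Y" "f z \<in> f ` g" "f z \<in> f ` h" using sub[OF g(1)] by blast+
          then show False using a by blast
        qed
      next
        assume a: "g \<inter> h = {}"
        show "\<not> (\<exists>q\<in>f`Y. q \<in> f ` g \<and> q \<in> f ` h)"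
        proof
          assume "\<exists>q\<in>f`Y. q \<in> f ` g \<and> q \<in> f ` h"
          then obtain z where "z \<in> Y" "f z \<in> f ` g" "f z \<in> f ` h" by blast
          then have "z \<in> g" "z \<in> h" using mem by simp_all
          then show False using a by blast
        qed
      qed
    qed
    obtain k where k: "k\<in>AY" "x\<in>k" "g \<inter> k = {}"
      using ex1_implies_ex[OF parax[OF g(1) x(1) xg]] by blast
    show "\<exists>!k. k \<in> (`) f ` AY \<and> p \<in> k \<and> \<not> (\<exists>q\<in>f`Y. q \<in> l \<and> q \<in> k)"
    proof (rule ex1I[of _ "f ` k"])
      have "\<not> (\<exists>q\<in>f`Y. q \<in> f ` g \<and> q \<in> f ` k)" using dis[OF k(1)] k(3) by simp
      then show "f ` k \<in> (`) f ` AY \<and> p \<in> f ` k \<and> \<not> (\<exists>q\<in>f`Y. q \<in> l \<and> q \<in> f ` k)"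
        using k(1,2) x(2) g(2) by blast
      fix k' assume k': "k' \<in> (`) f ` AY \<and> p \<in> k' \<and> \<not> (\<exists>q\<in>f`Y. q \<in> l \<and> q \<in> k')"
      then obtain h where h: "h \<in> AY" "k' = f ` h" by blast
      have "x \<in> h" using k' h(2) x(2) mem by simp
      moreover have "g \<inter> h = {}" using dis[OF h(1)] k' h(2) g(2) by simp
      ultimately have "h = k" using parax_uniq[OF g(1) x(1) xg h(1) k(1)] k by blast
      then show "k' = f ` k" using h(2) by simp
    qed
  qed
  obtain a b c where abc: "a\<in>Y" "b\<in>Y" "c\<in>Y" "\<forall>l\<in>AY. \<not> (a \<in> l \<and> b \<in> l \<and> c \<in> l)"
    using ap3 by blast
  have A3: "\<exists>a\<in>f`Y. \<exists>b\<in>f`Y. \<exists>c\<in>f`Y. \<forall>l\<in>(`) f ` AY. \<not> (a \<in> l \<and> b \<in> l \<and> c \<in> l)"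
  proof (intro bexI)
    show "\<forall>l\<in>(`) f ` AY. \<not> (f a \<in> l \<and> f b \<in> l \<and> f c \<in> l)" using abc(4) mem by auto
  qed (use abc in auto)
  show ?thesis unfolding affine_plane_def using A1 A2 A3 by (intro conjI)
qed

end

locale constr =
  fixes m :: nat
    and Pts :: "'a set" and Lns :: "'b set" and inc :: "'a \<Rightarrow> 'b \<Rightarrow> bool"
    and X :: "'a \<Rightarrow> 'x set" and AL :: "'a \<Rightarrow> 'x set set"
    and R :: "'b \<Rightarrow> 'r set" and S :: "'b \<Rightarrow> 's set" and Arr :: "'b \<Rightarrow> 'r \<Rightarrow> 'a \<Rightarrow> 's"
    and \<pi> :: "'a \<Rightarrow> 'b \<Rightarrow> 'x set set" and \<beta> :: "'a \<Rightarrow> 'b \<Rightarrow> 's \<Rightarrow> 'x set"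
  assumes m2: "m \<ge> 2"
    and PP: "projective_plane_of_order Pts Lns inc m"
    and AP: "\<forall>P\<in>Pts. affine_plane_of_order (X P) (AL P) m"
    and OA: "\<forall>l\<in>Lns. OA2 (R l) {P\<in>Pts. inc P l} (S l) (Arr l) m"
    and PI: "\<forall>P\<in>Pts. bij_betw (\<pi> P) {l\<in>Lns. inc P l} (parallel_classes (X P) (AL P))"
    and BE: "\<forall>P\<in>Pts. \<forall>l\<in>Lns. inc P l \<longrightarrow> bij_betw (\<beta> P l) (S l) (\<pi> P l)"
begin

abbreviation "pl l \<equiv> {P\<in>Pts. inc P l}"
abbreviation "Xh \<equiv> H_points Pts X"
abbreviation "Lh \<equiv> H_lines Pts Lns inc R \<beta> Arr"
abbreviation "HL l r \<equiv> H_line Pts inc \<beta> Arr l r"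

lemma aff_P: "P \<in> Pts \<Longrightarrow> aff (X P) (AL P) m"
  using AP m2 by (simp add: aff_def)

lemma pp: "projective_plane Pts Lns inc" using PP by (simp add: projective_plane_of_order_def)
lemma pp1: "\<forall>p\<in>Pts. \<forall>q\<in>Pts. p \<noteq> q \<longrightarrow> (\<exists>!l. l \<in> Lns \<and> inc p l \<and> inc q l)"
  using pp unfolding projective_plane_def by (rule conjunct1)
lemma pp2: "\<forall>l\<in>Lns. \<forall>k\<in>Lns. l \<noteq> k \<longrightarrow> (\<exists>!p. p \<in> Pts \<and> inc p l \<and> inc p k)"
  using pp unfolding projective_plane_def by (rule conjunct1[OF conjunct2])
lemma card_pl: "l \<in> Lns \<Longrightarrow> card (pl l) = m + 1"
  using PP by (simp add: projective_plane_of_order_def)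
lemma card_lp: "P \<in> Pts \<Longrightarrow> card {l\<in>Lns. inc P l} = m + 1"
  using PP by (simp add: projective_plane_of_order_def)
lemma fin_pl: "l \<in> Lns \<Longrightarrow> finite (pl l)"
  using card_pl by (metis add_is_0 card.infinite one_neq_zero)

lemma join_uniq: "P\<in>Pts \<Longrightarrow> Q\<in>Pts \<Longrightarrow> P\<noteq>Q \<Longrightarrow> l\<in>Lns \<Longrightarrow> l'\<in>Lns \<Longrightarrow>
   inc P l \<Longrightarrow> inc Q l \<Longrightarrow> inc P l' \<Longrightarrow> inc Q l' \<Longrightarrow> l = l'"
  using ex1_eq[OF mp[OF bspec[OF bspec[OF pp1]]], of P Q l l'] by blast
lemma join_ex: "P\<in>Pts \<Longrightarrow> Q\<in>Pts \<Longrightarrow> P\<noteq>Q \<Longrightarrow> \<exists>l. l\<in>Lns \<and> inc P l \<and> inc Q l"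
  using ex1_implies_ex[OF mp[OF bspec[OF bspec[OF pp1]]], of P Q] by blast
lemma meet_uniq: "l\<in>Lns \<Longrightarrow> l'\<in>Lns \<Longrightarrow> l\<noteq>l' \<Longrightarrow> P\<in>Pts \<Longrightarrow> Q\<in>Pts \<Longrightarrow>
   inc P l \<Longrightarrow> inc P l' \<Longrightarrow> inc Q l \<Longrightarrow> inc Q l' \<Longrightarrow> P = Q"
  using ex1_eq[OF mp[OF bspec[OF bspec[OF pp2]]], of l l' P Q] by blast
lemma meet_ex: "l\<in>Lns \<Longrightarrow> l'\<in>Lns \<Longrightarrow> l\<noteq>l' \<Longrightarrow> \<exists>P. P\<in>Pts \<and> inc P l \<and> inc P l'"
  using ex1_implies_ex[OF mp[OF bspec[OF bspec[OF pp2]]], of l l'] by blast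

lemma two_on_line: "l \<in> Lns \<Longrightarrow> P \<in> pl l \<Longrightarrow> \<exists>Q\<in>pl l. Q \<noteq> P"
proof -
  assume l: "l \<in> Lns" and P: "P \<in> pl l"
  have "\<not> card (pl l) \<le> Suc 0" using card_pl[OF l] m2 by simp
  then show ?thesis using card_le_Suc0_iff_eq[OF fin_pl[OF l]] using P by auto
qed

lemma pl_ne: "l \<in> Lns \<Longrightarrow> \<exists>P. P \<in> pl l"
  using card_pl by (metis card.empty empty_iff equals0I add_is_0 one_neq_zero)

lemma line_ex: "P \<in> Pts \<Longrightarrow> \<exists>l. l \<in> Lns \<and> inc P l"
proof -
  assume P: "P \<in> Pts"
  have "{l\<in>Lns. inc P l} \<noteq> {}" using card_lp[OF P] by (metis card.empty add_is_0 one_neq_zero)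
  then show ?thesis by blast
qed

lemma pl_inj: "l\<in>Lns \<Longrightarrow> l'\<in>Lns \<Longrightarrow> pl l = pl l' \<Longrightarrow> l = l'"
proof (rule ccontr)
  assume l: "l\<in>Lns" and l': "l'\<in>Lns" and e: "pl l = pl l'" and ne: "l \<noteq> l'"
  obtain P where P: "P \<in> pl l" using pl_ne[OF l] by blast
  obtain Q where Q: "Q \<in> pl l" "Q \<noteq> P" using two_on_line[OF l P] by blast
  have "P = Q" using meet_uniq[OF l l' ne, of P Q] P Q e by blast
  then show False using Q by simp
qed

lemma oa: "l \<in> Lns \<Longrightarrow> OA2 (R l) (pl l) (S l) (Arr l) m" using OA by blast
lemma finR: "l \<in> Lns \<Longrightarrow> finite (R l)" using oa by (simp add: OA2_def)
lemma cardR: "l \<in> Lns \<Longrightarrow> card (R l) = m^2" using oa by (simp add: OA2_def)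
lemma cardS: "l \<in> Lns \<Longrightarrow> card (S l) = m" using oa by (simp add: OA2_def)
lemma ArrS: "l \<in> Lns \<Longrightarrow> r \<in> R l \<Longrightarrow> P \<in> pl l \<Longrightarrow> Arr l r P \<in> S l"
  using oa unfolding OA2_def by blast
lemma oa_ex1: "l \<in> Lns \<Longrightarrow> P \<in> pl l \<Longrightarrow> Q \<in> pl l \<Longrightarrow> P \<noteq> Q \<Longrightarrow> s \<in> S l \<Longrightarrow> t \<in> S l \<Longrightarrow>
   \<exists>!r. r \<in> R l \<and> Arr l r P = s \<and> Arr l r Q = t"
proof -
  assume a: "l \<in> Lns" "P \<in> pl l" "Q \<in> pl l" "P \<noteq> Q" "s \<in> S l" "t \<in> S l"
  have "\<forall>c1\<in>pl l. \<forall>c2\<in>pl l. c1 \<noteq> c2 \<longrightarrow>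
        (\<forall>s1\<in>S l. \<forall>s2\<in>S l. \<exists>!r. r \<in> R l \<and> Arr l r c1 = s1 \<and> Arr l r c2 = s2)"
    using oa[OF a(1)] unfolding OA2_def by blast
  then show ?thesis using a by blast
qed
lemma oa_uniq: "l \<in> Lns \<Longrightarrow> P \<in> pl l \<Longrightarrow> Q \<in> pl l \<Longrightarrow> P \<noteq> Q \<Longrightarrow> r \<in> R l \<Longrightarrow> r' \<in> R l \<Longrightarrow>
   Arr l r P = Arr l r' P \<Longrightarrow> Arr l r Q = Arr l r' Q \<Longrightarrow> r = r'"
proof -
  assume a: "l \<in> Lns" "P \<in> pl l" "Q \<in> pl l" "P \<noteq> Q" "r \<in> R l" "r' \<in> R l"
     "Arr l r P = Arr l r' P" "Arr l r Q = Arr l r' Q"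
  have "\<exists>!r''. r'' \<in> R l \<and> Arr l r'' P = Arr l r P \<and> Arr l r'' Q = Arr l r Q"
    using oa_ex1[OF a(1-4) ArrS[OF a(1,5,2)] ArrS[OF a(1,5,3)]] .
  then show ?thesis using a(5-8) by (metis (mono_tags, lifting))
qed
lemma oa_ex: "l \<in> Lns \<Longrightarrow> P \<in> pl l \<Longrightarrow> Q \<in> pl l \<Longrightarrow> P \<noteq> Q \<Longrightarrow> s \<in> S l \<Longrightarrow> t \<in> S l \<Longrightarrow>
   \<exists>r. r \<in> R l \<and> Arr l r P = s \<and> Arr l r Q = t"
  using oa_ex1 by (meson ex1_implies_ex)

lemma card_col: assumes l: "l \<in> Lns" and P: "P \<in> pl l" and s: "s \<in> S l"
  shows "card {r\<in>R l. Arr l r P = s} = m"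
proof -
  obtain Q where Q: "Q \<in> pl l" "Q \<noteq> P" using two_on_line[OF l P] by blast
  have "bij_betw (\<lambda>r. Arr l r Q) {r\<in>R l. Arr l r P = s} (S l)"
  proof (rule bij_betw_imageI)
    show "inj_on (\<lambda>r. Arr l r Q) {r\<in>R l. Arr l r P = s}"
    proof (rule inj_onI)
      fix r r' assume "r \<in> {r\<in>R l. Arr l r P = s}" "r' \<in> {r\<in>R l. Arr l r P = s}" "Arr l r Q = Arr l r' Q"
      then show "r = r'" using oa_uniq[OF l P Q(1) Q(2)[symmetric]] by auto
    qed
    show "(\<lambda>r. Arr l r Q) ` {r\<in>R l. Arr l r P = s} = S l"
    proof
      show "(\<lambda>r. Arr l r Q) ` {r\<in>R l. Arr l r P = s} \<subseteq> S l" using ArrS[OF l _ Q(1)] by blast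
      show "S l \<subseteq> (\<lambda>r. Arr l r Q) ` {r\<in>R l. Arr l r P = s}"
      proof
        fix t assume t: "t \<in> S l"
        obtain r where "r \<in> R l" "Arr l r P = s" "Arr l r Q = t"
          using oa_ex[OF l P Q(1) Q(2)[symmetric] s t] by blast
        then show "t \<in> (\<lambda>r. Arr l r Q) ` {r\<in>R l. Arr l r P = s}" by force
      qed
    qed
  qed
  then show ?thesis using cardS[OF l] bij_betw_same_card by metis
qed

lemma two_rows: assumes l: "l \<in> Lns" and P: "P \<in> pl l" and s: "s \<in> S l"
  shows "\<exists>r1 r2. r1 \<in> R l \<and> r2 \<in> R l \<and> r1 \<noteq> r2 \<and> Arr l r1 P = s \<and> Arr l r2 P = s"
proof -
  have fin: "finite {r\<in>R l. Arr l r P = s}" using finR[OF l] by simp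
  have "\<not> card {r\<in>R l. Arr l r P = s} \<le> Suc 0" using card_col[OF l P s] m2 by simp
  then obtain r1 r2 where "r1 \<in> {r\<in>R l. Arr l r P = s}" "r2 \<in> {r\<in>R l. Arr l r P = s}" "r1 \<noteq> r2"
    using card_le_Suc0_iff_eq[OF fin] by blast
  then show ?thesis by blast
qed

lemma row_ex: "l \<in> Lns \<Longrightarrow> P \<in> pl l \<Longrightarrow> s \<in> S l \<Longrightarrow> \<exists>r\<in>R l. Arr l r P = s"
  using two_rows by blast

lemma rows_eq: "l \<in> Lns \<Longrightarrow> r \<in> R l \<Longrightarrow> r' \<in> R l \<Longrightarrow> (\<forall>P\<in>pl l. Arr l r P = Arr l r' P) \<Longrightarrow> r = r'"
proof -
  assume a: "l \<in> Lns" "r \<in> R l" "r' \<in> R l" "\<forall>P\<in>pl l. Arr l r P = Arr l r' P"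
  obtain P where P: "P \<in> pl l" using pl_ne[OF a(1)] by blast
  obtain Q where Q: "Q \<in> pl l" "Q \<noteq> P" using two_on_line[OF a(1) P] by blast
  show ?thesis using oa_uniq[OF a(1) P Q(1) Q(2)[symmetric] a(2,3)] a(4) P Q(1) by blast
qed

lemma rows_agree: assumes l: "l \<in> Lns" and r: "r \<in> R l" and r': "r' \<in> R l"
  shows "\<exists>P\<in>pl l. Arr l r P = Arr l r' P"
proof (rule ccontr)
  assume na: "\<not> (\<exists>P\<in>pl l. Arr l r P = Arr l r' P)"
  then have ne: "r \<noteq> r'" using pl_ne[OF l] by blast
  define T where "T P = {r''\<in>R l - {r}. Arr l r'' P = Arr l r P}" for P
  have cT: "card (T P) = m - 1" if P: "P \<in> pl l" for P
  proof -
    have "T P = {r''\<in>R l. Arr l r'' P = Arr l r P} - {r}" unfolding T_def by blast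
    moreover have "r \<in> {r''\<in>R l. Arr l r'' P = Arr l r P}" using r by simp
    ultimately show ?thesis using card_col[OF l P ArrS[OF l r P]] finR[OF l] by simp
  qed
  have fT: "finite (T P)" for P unfolding T_def using finR[OF l] by simp
  have dT: "\<forall>P\<in>pl l. \<forall>Q\<in>pl l. P \<noteq> Q \<longrightarrow> T P \<inter> T Q = {}"
  proof (intro ballI impI)
    fix P Q assume P: "P \<in> pl l" and Q: "Q \<in> pl l" and PQ: "P \<noteq> Q"
    show "T P \<inter> T Q = {}"
    proof (rule ccontr)
      assume "T P \<inter> T Q \<noteq> {}"
      then obtain r'' where "r'' \<in> T P" "r'' \<in> T Q" by blast
      then have "r'' \<in> R l" "r'' \<noteq> r" "Arr l r'' P = Arr l r P" "Arr l r'' Q = Arr l r Q"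
        unfolding T_def by auto
      then show False using oa_uniq[OF l P Q PQ _ r] by blast
    qed
  qed
  have "card (\<Union>P\<in>pl l. T P) = (\<Sum>P\<in>pl l. card (T P))"
    using card_UN_disjoint[OF fin_pl[OF l]] fT dT by blast
  also have "\<dots> = (m + 1) * (m - 1)" using cT card_pl[OF l] by simp
  finally have c1: "card (\<Union>P\<in>pl l. T P) = (m + 1) * (m - 1)" .
  have sub: "(\<Union>P\<in>pl l. T P) \<subseteq> R l - {r, r'}" using na unfolding T_def by auto
  have "card (\<Union>P\<in>pl l. T P) \<le> card (R l - {r, r'})"
    using card_mono[OF _ sub] finR[OF l] by simp
  also have "\<dots> = m^2 - 2" using cardR[OF l] r r' ne finR[OF l] by (simp add: card_Diff_subset)
  finally have "(m + 1) * (m - 1) \<le> m^2 - 2" using c1 by simp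
  moreover have "(m + 1) * (m - 1) = m^2 - 1" using m2 by (simp add: power2_eq_square algebra_simps)
  moreover have "m^2 \<ge> 4" using m2 by (metis power2_nat_le_eq_le power2_eq_square mult_le_mono numeral_Bit0 numeral_times_numeral num_double)
  ultimately show False by simp
qed

end

context constr begin

lemma PiB: "P\<in>Pts \<Longrightarrow> bij_betw (\<pi> P) {l\<in>Lns. inc P l} (parallel_classes (X P) (AL P))"
  using PI by blast
lemma BeB: "P\<in>Pts \<Longrightarrow> l\<in>Lns \<Longrightarrow> inc P l \<Longrightarrow> bij_betw (\<beta> P l) (S l) (\<pi> P l)"
  using BE by blast
lemma pi_class: "P\<in>Pts \<Longrightarrow> l\<in>Lns \<Longrightarrow> inc P l \<Longrightarrow> \<pi> P l \<in> parallel_classes (X P) (AL P)"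
  using bij_betwE[OF PiB] by blast
lemma slice_class: "P\<in>Pts \<Longrightarrow> l\<in>Lns \<Longrightarrow> inc P l \<Longrightarrow> s \<in> S l \<Longrightarrow> \<beta> P l s \<in> \<pi> P l"
  using bij_betwE[OF BeB] by blast
lemma slice_AL: "P\<in>Pts \<Longrightarrow> l\<in>Lns \<Longrightarrow> inc P l \<Longrightarrow> s \<in> S l \<Longrightarrow> \<beta> P l s \<in> AL P"
  using aff.class_sub[OF aff_P pi_class] slice_class by blast
lemma slice_sub: "P\<in>Pts \<Longrightarrow> l\<in>Lns \<Longrightarrow> inc P l \<Longrightarrow> s \<in> S l \<Longrightarrow> \<beta> P l s \<subseteq> X P"
  using aff.sub[OF aff_P slice_AL] by blast
lemma slice_card: "P\<in>Pts \<Longrightarrow> l\<in>Lns \<Longrightarrow> inc P l \<Longrightarrow> s \<in> S l \<Longrightarrow> card (\<beta> P l s) = m"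
  using aff.cardl[OF aff_P slice_AL] by blast
lemma slice_fin: "P\<in>Pts \<Longrightarrow> l\<in>Lns \<Longrightarrow> inc P l \<Longrightarrow> s \<in> S l \<Longrightarrow> finite (\<beta> P l s)"
  using aff.finl[OF aff_P slice_AL] by blast
lemma slice_ne: "P\<in>Pts \<Longrightarrow> l\<in>Lns \<Longrightarrow> inc P l \<Longrightarrow> s \<in> S l \<Longrightarrow> \<exists>x. x \<in> \<beta> P l s"
  using aff.nonempty[OF aff_P slice_AL] by blast

lemma slice_sym: assumes P: "P\<in>Pts" and l: "l\<in>Lns" and i: "inc P l" and s: "s \<in> S l" and s': "s' \<in> S l"
  and x: "x \<in> \<beta> P l s" and x': "x \<in> \<beta> P l s'" shows "s = s'"
proof -
  have "\<beta> P l s = \<beta> P l s'"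
    using aff.class_disj[OF aff_P[OF P] pi_class[OF P l i] slice_class[OF P l i s] slice_class[OF P l i s']] x x'
    by blast
  then show ?thesis using bij_betw_imp_inj_on[OF BeB[OF P l i]] s s' by (simp add: inj_on_eq_iff)
qed

lemma cover: assumes P: "P\<in>Pts" and l: "l\<in>Lns" and i: "inc P l" and x: "x \<in> X P"
  shows "\<exists>s\<in>S l. x \<in> \<beta> P l s"
proof -
  have "\<Union>(\<pi> P l) = X P" using pi_class[OF P l i] unfolding parallel_classes_def by blast
  then obtain a where a: "a \<in> \<pi> P l" "x \<in> a" using x by blast
  then have "a \<in> \<beta> P l ` S l" using bij_betw_imp_surj_on[OF BeB[OF P l i]] by simp
  then show ?thesis using a by blast
qed

lemma line_slice: assumes P: "P\<in>Pts" and a: "a \<in> AL P"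
  shows "\<exists>l s. l\<in>Lns \<and> inc P l \<and> s\<in>S l \<and> \<beta> P l s = a"
proof -
  have "aff.par (AL P) a \<in> parallel_classes (X P) (AL P)" using aff.par_class[OF aff_P[OF P] a] .
  then have "aff.par (AL P) a \<in> \<pi> P ` {l\<in>Lns. inc P l}" using bij_betw_imp_surj_on[OF PiB[OF P]] by simp
  then obtain l where l: "l\<in>Lns" "inc P l" "\<pi> P l = aff.par (AL P) a" by blast
  have "a \<in> \<pi> P l" using l(3) aff.in_par[OF aff_P[OF P] a] by simp
  then have "a \<in> \<beta> P l ` S l" using bij_betw_imp_surj_on[OF BeB[OF P l(1,2)]] by simp
  then show ?thesis using l by blast
qed

lemma slice_unique: assumes P: "P\<in>Pts" and l: "l\<in>Lns" and l': "l'\<in>Lns" and i: "inc P l" and i': "inc P l'"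
  and s: "s \<in> S l" and s': "s' \<in> S l'" and e: "\<beta> P l s = \<beta> P l' s'"
  shows "l = l' \<and> s = s'"
proof -
  have c1: "\<pi> P l = aff.par (AL P) (\<beta> P l s)"
    using aff.class_eq[OF aff_P[OF P] pi_class[OF P l i] slice_class[OF P l i s]] .
  have c2: "\<pi> P l' = aff.par (AL P) (\<beta> P l s)"
    using aff.class_eq[OF aff_P[OF P] pi_class[OF P l' i'] slice_class[OF P l' i' s']] e by simp
  have "\<pi> P l = \<pi> P l'" using c1 c2 by simp
  then have ll: "l = l'" using inj_onD[OF bij_betw_imp_inj_on[OF PiB[OF P]]] l l' i i' by blast
  then show ?thesis using bij_betw_imp_inj_on[OF BeB[OF P l i]] s s' e by (simp add: inj_on_eq_iff)
qed

lemma Hmem: "((P,x) \<in> HL l r) = (P\<in>Pts \<and> inc P l \<and> x \<in> \<beta> P l (Arr l r P))"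
  by (simp add: H_line_def)
lemma Lh_iff: "(g \<in> Lh) = (\<exists>l r. l\<in>Lns \<and> r\<in>R l \<and> g = HL l r)"
  by (auto simp: H_lines_def)
lemma Xh_iff: "((P,x) \<in> Xh) = (P\<in>Pts \<and> x\<in>X P)"
  by (simp add: H_points_def)
lemma Xh_Sigma: "Xh = Sigma Pts X"
  by (auto simp: H_points_def)
lemma HL_Sigma: "HL l r = Sigma (pl l) (\<lambda>P. \<beta> P l (Arr l r P))"
  by (auto simp: H_line_def)

lemma HL_sub: assumes l: "l\<in>Lns" and r: "r\<in>R l" shows "HL l r \<subseteq> Xh"
proof
  fix p assume p: "p \<in> HL l r"
  obtain P x where px: "p = (P,x)" by (cases p)
  have a: "P\<in>Pts" "inc P l" "x \<in> \<beta> P l (Arr l r P)" using p px by (simp_all add: Hmem)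
  have "x \<in> X P" using slice_sub[OF a(1) l a(2) ArrS[OF l r]] a by blast
  then show "p \<in> Xh" using px a(1) by (simp add: Xh_iff)
qed

lemma HL_pl: assumes l: "l\<in>Lns" and r: "r\<in>R l" and P: "P \<in> Pts"
  shows "(\<exists>x. (P,x) \<in> HL l r) = inc P l"
proof
  assume "\<exists>x. (P,x) \<in> HL l r" then show "inc P l" by (auto simp: Hmem)
next
  assume i: "inc P l"
  obtain x where "x \<in> \<beta> P l (Arr l r P)" using slice_ne[OF P l i ArrS[OF l r]] P i by blast
  then show "\<exists>x. (P,x) \<in> HL l r" using P i by (auto simp: Hmem)
qed

lemma HL_inj: assumes l: "l\<in>Lns" and l': "l'\<in>Lns" and r: "r\<in>R l" and r': "r'\<in>R l'"
  and e: "HL l r = HL l' r'" shows "l = l' \<and> r = r'"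
proof -
  have "pl l = pl l'"
  proof (intro Collect_cong conj_cong refl)
    fix P assume "P \<in> Pts"
    then show "inc P l = inc P l'" using HL_pl[OF l r] HL_pl[OF l' r'] e by metis
  qed
  then have ll: "l = l'" using pl_inj[OF l l'] by blast
  have "\<forall>P\<in>pl l. Arr l r P = Arr l r' P"
  proof
    fix P assume P: "P \<in> pl l"
    obtain x where x: "x \<in> \<beta> P l (Arr l r P)" using slice_ne[OF _ l _ ArrS[OF l r P]] P by blast
    then have "(P,x) \<in> HL l r" using P by (simp add: Hmem)
    then have "(P,x) \<in> HL l' r'" using e by simp
    then have "x \<in> \<beta> P l' (Arr l' r' P)" by (simp add: Hmem)
    then have "x \<in> \<beta> P l (Arr l r' P)" using ll by simp
    then show "Arr l r P = Arr l r' P"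
      using slice_sym[OF _ l _ ArrS[OF l r P] ArrS[OF l r'[folded ll] P] x] P by blast
  qed
  then show ?thesis using rows_eq[OF l r r'[folded ll]] ll by blast
qed

end

context constr begin

lemma HL_cases: assumes "g \<in> Lh" obtains l r where "l\<in>Lns" "r\<in>R l" "g = HL l r"
  using assms Lh_iff by blast

lemma Xh_cases: assumes "p \<in> Xh" obtains P x where "p = (P,x)" "P\<in>Pts" "x \<in> X P"
  using assms by (cases p) (auto simp: Xh_iff)

lemma nb_same: assumes P: "P\<in>Pts" and x: "x \<in> X P" and y: "y \<in> X P" and xy: "x \<noteq> y"
  shows "\<exists>g h. g\<in>Lh \<and> h\<in>Lh \<and> g\<noteq>h \<and> (P,x)\<in>g \<and> (P,y)\<in>g \<and> (P,x)\<in>h \<and> (P,y)\<in>h"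
proof -
  obtain a where a: "a \<in> AL P" "x \<in> a" "y \<in> a"
    using ex1_implies_ex[OF aff.join[OF aff_P[OF P] x y xy]] by blast
  obtain l s where ls: "l\<in>Lns" "inc P l" "s\<in>S l" "\<beta> P l s = a" using line_slice[OF P a(1)] by blast
  have Pl: "P \<in> pl l" using P ls by simp
  obtain r1 r2 where r: "r1 \<in> R l" "r2 \<in> R l" "r1 \<noteq> r2" "Arr l r1 P = s" "Arr l r2 P = s"
    using two_rows[OF ls(1) Pl ls(3)] by blast
  have "HL l r1 \<noteq> HL l r2" using HL_inj[OF ls(1) ls(1) r(1) r(2)] r(3) by blast
  moreover have "HL l r1 \<in> Lh" "HL l r2 \<in> Lh" using ls(1) r(1,2) Lh_iff by blast+
  moreover have "(P,x) \<in> HL l r1" "(P,y) \<in> HL l r1" "(P,x) \<in> HL l r2" "(P,y) \<in> HL l r2"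
    using P ls r a by (simp_all add: Hmem)
  ultimately show ?thesis by blast
qed

lemma nb_diff: assumes P: "P\<in>Pts" and Q: "Q\<in>Pts" and PQ: "P \<noteq> Q"
  and g: "g \<in> Lh" and h: "h \<in> Lh"
  and m: "(P,x)\<in>g" "(Q,y)\<in>g" "(P,x)\<in>h" "(Q,y)\<in>h"
  shows "g = h"
proof -
  obtain l r where g': "l\<in>Lns" "r\<in>R l" "g = HL l r" using HL_cases[OF g] by blast
  obtain l' r' where h': "l'\<in>Lns" "r'\<in>R l'" "h = HL l' r'" using HL_cases[OF h] by blast
  have i: "inc P l" "inc Q l" "inc P l'" "inc Q l'" using m g'(3) h'(3) by (simp_all add: Hmem)
  have ll: "l = l'" using join_uniq[OF P Q PQ g'(1) h'(1) i] .
  have x1: "x \<in> \<beta> P l (Arr l r P)" "x \<in> \<beta> P l (Arr l r' P)" using m g'(3) h'(3) ll by (simp_all add: Hmem)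
  have y1: "y \<in> \<beta> Q l (Arr l r Q)" "y \<in> \<beta> Q l (Arr l r' Q)" using m g'(3) h'(3) ll by (simp_all add: Hmem)
  have r': "r' \<in> R l" using h'(2) ll by simp
  have Pl: "P \<in> pl l" and Ql: "Q \<in> pl l" using P Q i by simp_all
  have e1: "Arr l r P = Arr l r' P"
    using slice_sym[OF P g'(1) i(1) ArrS[OF g'(1) g'(2) Pl] ArrS[OF g'(1) r' Pl] x1] .
  have e2: "Arr l r Q = Arr l r' Q"
    using slice_sym[OF Q g'(1) i(2) ArrS[OF g'(1) g'(2) Ql] ArrS[OF g'(1) r' Ql] y1] .
  have "r = r'" using oa_uniq[OF g'(1) Pl Ql PQ g'(2) r' e1 e2] .
  then show ?thesis using g'(3) h'(3) ll by simp
qed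

lemma pt_nb_iff: assumes p: "p \<in> Xh" and q: "q \<in> Xh" shows "pt_nb Lh p q = (fst p = fst q)"
proof -
  obtain P x where px: "p = (P,x)" "P\<in>Pts" "x \<in> X P" using Xh_cases[OF p] by blast
  obtain Q y where qy: "q = (Q,y)" "Q\<in>Pts" "y \<in> X Q" using Xh_cases[OF q] by blast
  show ?thesis
  proof
    assume nb: "pt_nb Lh p q"
    show "fst p = fst q"
    proof (rule ccontr)
      assume "fst p \<noteq> fst q"
      then have PQ: "P \<noteq> Q" using px qy by simp
      have "p \<noteq> q" using PQ px qy by simp
      then obtain g h where "g\<in>Lh" "h\<in>Lh" "g \<noteq> h" "p \<in> g" "q \<in> g" "p \<in> h" "q \<in> h"
        using nb unfolding pt_nb_def by blast
      then show False using nb_diff[OF px(2) qy(2) PQ] px(1) qy(1) by blast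
    qed
  next
    assume "fst p = fst q"
    then have PQ: "P = Q" using px qy by simp
    show "pt_nb Lh p q"
    proof (cases "x = y")
      case True then show ?thesis using px qy PQ by (simp add: pt_nb_def)
    next
      case False
      then show ?thesis using nb_same[OF px(2) px(3) _ False] qy(3) PQ px(1) qy(1)
        unfolding pt_nb_def by blast
    qed
  qed
qed

lemma nbhd_pts_eq: assumes P: "P \<in> Pts" and x: "x \<in> X P"
  shows "nbhd_pts Xh Lh (P,x) = Pair P ` X P"
proof
  show "nbhd_pts Xh Lh (P,x) \<subseteq> Pair P ` X P"
  proof
    fix q assume q: "q \<in> nbhd_pts Xh Lh (P,x)"
    then have qX: "q \<in> Xh" and nb: "pt_nb Lh (P,x) q" by (simp_all add: nbhd_pts_def)
    obtain Q y where qy: "q = (Q,y)" "Q\<in>Pts" "y \<in> X Q" using Xh_cases[OF qX] by blast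
    have "P = Q" using pt_nb_iff[of "(P,x)" q] nb qX P x qy(1) by (simp add: Xh_iff)
    then show "q \<in> Pair P ` X P" using qy by blast
  qed
  show "Pair P ` X P \<subseteq> nbhd_pts Xh Lh (P,x)"
  proof
    fix q assume "q \<in> Pair P ` X P"
    then obtain y where y: "y \<in> X P" "q = (P,y)" by blast
    have qX: "q \<in> Xh" using y P by (simp add: Xh_iff)
    have "pt_nb Lh (P,x) q" using pt_nb_iff[of "(P,x)" q] qX P x y(2) by (simp add: Xh_iff)
    then show "q \<in> nbhd_pts Xh Lh (P,x)" using qX by (simp add: nbhd_pts_def)
  qed
qed

lemma HL_int: assumes l: "l\<in>Lns" and r: "r\<in>R l" and P: "P\<in>Pts"
  shows "HL l r \<inter> Pair P ` X P = (if inc P l then Pair P ` \<beta> P l (Arr l r P) else {})"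
proof (cases "inc P l")
  case True
  have "\<beta> P l (Arr l r P) \<subseteq> X P" using slice_sub[OF P l True ArrS[OF l r]] P True by blast
  then show ?thesis using True P by (auto simp: Hmem)
next
  case False
  then show ?thesis by (auto simp: Hmem)
qed

lemma inj_Pair: "inj (Pair P)" by (rule injI) simp

lemma nbhd_lines_eq: assumes P: "P \<in> Pts" and x: "x \<in> X P"
  shows "nbhd_lines Xh Lh (P,x) = (`) (Pair P) ` AL P"
proof
  show "nbhd_lines Xh Lh (P,x) \<subseteq> (`) (Pair P) ` AL P"
  proof
    fix g' assume "g' \<in> nbhd_lines Xh Lh (P,x)"
    then obtain g where g: "g \<in> Lh" "g' = g \<inter> Pair P ` X P" "g' \<noteq> {}"
      unfolding nbhd_lines_def nbhd_pts_eq[OF P x] by blast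
    obtain l r where lr: "l\<in>Lns" "r\<in>R l" "g = HL l r" using HL_cases[OF g(1)] by blast
    have i: "inc P l" using g(2,3) lr HL_int[OF lr(1,2) P] by (auto split: if_splits)
    have "g' = Pair P ` \<beta> P l (Arr l r P)" using g(2) lr HL_int[OF lr(1,2) P] i by simp
    moreover have "\<beta> P l (Arr l r P) \<in> AL P" using slice_AL[OF P lr(1) i ArrS[OF lr(1,2)]] P i by blast
    ultimately show "g' \<in> (`) (Pair P) ` AL P" by blast
  qed
  show "(`) (Pair P) ` AL P \<subseteq> nbhd_lines Xh Lh (P,x)"
  proof
    fix g' assume "g' \<in> (`) (Pair P) ` AL P"
    then obtain a where a: "a \<in> AL P" "g' = Pair P ` a" by blast
    obtain l s where ls: "l\<in>Lns" "inc P l" "s\<in>S l" "\<beta> P l s = a" using line_slice[OF P a(1)] by blast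
    obtain r where r: "r \<in> R l" "Arr l r P = s" using row_ex[OF ls(1) _ ls(3)] P ls(2) by blast
    have e: "HL l r \<inter> Pair P ` X P = g'" using HL_int[OF ls(1) r(1) P] ls r a by simp
    have "g' \<noteq> {}" using a aff.nonempty[OF aff_P[OF P]] by blast
    moreover have "HL l r \<in> Lh" using ls(1) r(1) Lh_iff by blast
    ultimately show "g' \<in> nbhd_lines Xh Lh (P,x)"
      unfolding nbhd_lines_def nbhd_pts_eq[OF P x] using e by blast
  qed
qed

lemma count_restr: assumes P: "P \<in> Pts" and x: "x \<in> X P" and g': "g' \<in> nbhd_lines Xh Lh (P,x)"
  shows "card {g\<in>Lh. g \<inter> nbhd_pts Xh Lh (P,x) = g'} = m"
proof -
  obtain a where a: "a \<in> AL P" "g' = Pair P ` a" using g' nbhd_lines_eq[OF P x] by blast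
  obtain l s where ls: "l\<in>Lns" "inc P l" "s\<in>S l" "\<beta> P l s = a" using line_slice[OF P a(1)] by blast
  have Pl: "P \<in> pl l" using P ls(2) by simp
  have eq: "{g\<in>Lh. g \<inter> nbhd_pts Xh Lh (P,x) = g'} = (\<lambda>r. HL l r) ` {r\<in>R l. Arr l r P = s}"
  proof
    show "{g\<in>Lh. g \<inter> nbhd_pts Xh Lh (P,x) = g'} \<subseteq> (\<lambda>r. HL l r) ` {r\<in>R l. Arr l r P = s}"
    proof
      fix g assume "g \<in> {g\<in>Lh. g \<inter> nbhd_pts Xh Lh (P,x) = g'}"
      then have g: "g \<in> Lh" "g \<inter> Pair P ` X P = g'" using nbhd_pts_eq[OF P x] by simp_all
      obtain l' r' where lr: "l'\<in>Lns" "r'\<in>R l'" "g = HL l' r'" using HL_cases[OF g(1)] by blast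
      have ne: "g' \<noteq> {}" using a aff.nonempty[OF aff_P[OF P]] by blast
      have i: "inc P l'" using g(2) ne lr HL_int[OF lr(1,2) P] by (auto split: if_splits)
      have "Pair P ` \<beta> P l' (Arr l' r' P) = Pair P ` a" using g(2) lr HL_int[OF lr(1,2) P] i a(2) by simp
      then have e: "\<beta> P l' (Arr l' r' P) = \<beta> P l s" using inj_image_eq_iff[OF inj_Pair] ls(4) by metis
      have "l' = l \<and> Arr l' r' P = s"
        using slice_unique[OF P lr(1) ls(1) i ls(2) ArrS[OF lr(1,2)] ls(3) e] P i by blast
      then show "g \<in> (\<lambda>r. HL l r) ` {r\<in>R l. Arr l r P = s}" using lr by blast
    qed
    show "(\<lambda>r. HL l r) ` {r\<in>R l. Arr l r P = s} \<subseteq> {g\<in>Lh. g \<inter> nbhd_pts Xh Lh (P,x) = g'}"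
    proof
      fix g assume "g \<in> (\<lambda>r. HL l r) ` {r\<in>R l. Arr l r P = s}"
      then obtain r where r: "r \<in> R l" "Arr l r P = s" "g = HL l r" by blast
      have "g \<inter> Pair P ` X P = g'" using HL_int[OF ls(1) r(1) P] ls r a by simp
      moreover have "g \<in> Lh" using ls(1) r Lh_iff by blast
      ultimately show "g \<in> {g\<in>Lh. g \<inter> nbhd_pts Xh Lh (P,x) = g'}" using nbhd_pts_eq[OF P x] by simp
    qed
  qed
  have inj: "inj_on (\<lambda>r. HL l r) {r\<in>R l. Arr l r P = s}"
    by (rule inj_onI) (use HL_inj[OF ls(1) ls(1)] in blast)
  show ?thesis unfolding eq card_image[OF inj] using card_col[OF ls(1) Pl ls(3)] .
qed

end

lemma proj_transfer:
  fixes f :: "'a \<Rightarrow> 'p" and h :: "'b \<Rightarrow> 'p set"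
  assumes pp: "projective_plane P L inc" and inj: "inj f" and injh: "inj_on h L"
    and mem: "\<forall>p\<in>P. \<forall>l\<in>L. (f p \<in> h l) = inc p l"
  shows "projective_plane (f`P) (h`L) (\<in>)"
proof -
  have p1: "\<forall>p\<in>P. \<forall>q\<in>P. p \<noteq> q \<longrightarrow> (\<exists>!l. l \<in> L \<and> inc p l \<and> inc q l)"
    using pp unfolding projective_plane_def by (rule conjunct1)
  have p2: "\<forall>l\<in>L. \<forall>k\<in>L. l \<noteq> k \<longrightarrow> (\<exists>!p. p \<in> P \<and> inc p l \<and> inc p k)"
    using pp unfolding projective_plane_def by (rule conjunct1[OF conjunct2])
  have p3: "\<exists>a\<in>P. \<exists>b\<in>P. \<exists>c\<in>P. \<exists>d\<in>P. distinct [a,b,c,d] \<and>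
        (\<forall>l\<in>L. \<not> (inc a l \<and> inc b l \<and> inc c l)) \<and>
        (\<forall>l\<in>L. \<not> (inc a l \<and> inc b l \<and> inc d l)) \<and>
        (\<forall>l\<in>L. \<not> (inc a l \<and> inc c l \<and> inc d l)) \<and>
        (\<forall>l\<in>L. \<not> (inc b l \<and> inc c l \<and> inc d l))"
    using pp unfolding projective_plane_def by (rule conjunct2[OF conjunct2])
  have A1: "\<forall>p\<in>f`P. \<forall>q\<in>f`P. p \<noteq> q \<longrightarrow> (\<exists>!l. l \<in> h`L \<and> p \<in> l \<and> q \<in> l)"
  proof (intro ballI impI)
    fix p q assume p: "p \<in> f`P" and q: "q \<in> f`P" and pq: "p \<noteq> q"
    obtain x where x: "x \<in> P" "p = f x" using p by blast
    obtain y where y: "y \<in> P" "q = f y" using q by blast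
    have xy: "x \<noteq> y" using pq x y by blast
    have e1: "\<exists>!l. l \<in> L \<and> inc x l \<and> inc y l" using p1 x(1) y(1) xy by blast
    obtain g where g: "g\<in>L" "inc x g" "inc y g" using ex1_implies_ex[OF e1] by blast
    show "\<exists>!l. l \<in> h`L \<and> p \<in> l \<and> q \<in> l"
    proof (rule ex1I[of _ "h g"])
      show "h g \<in> h`L \<and> p \<in> h g \<and> q \<in> h g" using g x y mem by blast
      fix l assume l: "l \<in> h`L \<and> p \<in> l \<and> q \<in> l"
      then obtain k where k: "k \<in> L" "l = h k" by blast
      have "inc x k" "inc y k" using l k x y mem by auto
      then have "k = g" using ex1_eq[OF e1, of k g] k g by blast
      then show "l = h g" using k by simp
    qed
  qed
  have A2: "\<forall>l\<in>h`L. \<forall>k\<in>h`L. l \<noteq> k \<longrightarrow> (\<exists>!p. p \<in> f`P \<and> p \<in> l \<and> p \<in> k)"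
  proof (intro ballI impI)
    fix l k assume l: "l \<in> h`L" and k: "k \<in> h`L" and lk: "l \<noteq> k"
    obtain a where a: "a \<in> L" "l = h a" using l by blast
    obtain b where b: "b \<in> L" "k = h b" using k by blast
    have ab: "a \<noteq> b" using lk a b by blast
    have e1: "\<exists>!p. p \<in> P \<and> inc p a \<and> inc p b" using p2 a(1) b(1) ab by blast
    obtain x where x: "x\<in>P" "inc x a" "inc x b" using ex1_implies_ex[OF e1] by blast
    show "\<exists>!p. p \<in> f`P \<and> p \<in> l \<and> p \<in> k"
    proof (rule ex1I[of _ "f x"])
      show "f x \<in> f`P \<and> f x \<in> l \<and> f x \<in> k" using x a b mem by blast
      fix p assume p: "p \<in> f`P \<and> p \<in> l \<and> p \<in> k"
      then obtain y where y: "y \<in> P" "p = f y" by blast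
      have "inc y a" "inc y b" using p y a b mem by auto
      then have "y = x" using ex1_eq[OF e1, of y x] y x by blast
      then show "p = f x" using y by simp
    qed
  qed
  obtain a b c d where abcd: "a\<in>P" "b\<in>P" "c\<in>P" "d\<in>P" "distinct [a,b,c,d]"
     "\<forall>l\<in>L. \<not> (inc a l \<and> inc b l \<and> inc c l)"
     "\<forall>l\<in>L. \<not> (inc a l \<and> inc b l \<and> inc d l)"
     "\<forall>l\<in>L. \<not> (inc a l \<and> inc c l \<and> inc d l)"
     "\<forall>l\<in>L. \<not> (inc b l \<and> inc c l \<and> inc d l)" using p3 by blast
  have dis: "distinct [f a, f b, f c, f d]" using abcd(5) inj by (auto simp: inj_eq)
  have A3: "\<exists>a\<in>f`P. \<exists>b\<in>f`P. \<exists>c\<in>f`P. \<exists>d\<in>f`P. distinct [a,b,c,d] \<and>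
        (\<forall>l\<in>h`L. \<not> (a \<in> l \<and> b \<in> l \<and> c \<in> l)) \<and>
        (\<forall>l\<in>h`L. \<not> (a \<in> l \<and> b \<in> l \<and> d \<in> l)) \<and>
        (\<forall>l\<in>h`L. \<not> (a \<in> l \<and> c \<in> l \<and> d \<in> l)) \<and>
        (\<forall>l\<in>h`L. \<not> (b \<in> l \<and> c \<in> l \<and> d \<in> l))"
  proof (intro bexI conjI)
    show "distinct [f a, f b, f c, f d]" by (rule dis)
    show "\<forall>l\<in>h`L. \<not> (f a \<in> l \<and> f b \<in> l \<and> f c \<in> l)" using abcd mem by auto
    show "\<forall>l\<in>h`L. \<not> (f a \<in> l \<and> f b \<in> l \<and> f d \<in> l)" using abcd mem by auto
    show "\<forall>l\<in>h`L. \<not> (f a \<in> l \<and> f c \<in> l \<and> f d \<in> l)" using abcd mem by auto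
    show "\<forall>l\<in>h`L. \<not> (f b \<in> l \<and> f c \<in> l \<and> f d \<in> l)" using abcd mem by auto
  qed (use abcd in auto)
  show ?thesis unfolding projective_plane_def using A1 A2 A3 by (intro conjI)
qed

context constr begin

lemma lines_meet: assumes g: "g \<in> Lh" and h: "h \<in> Lh" shows "g \<inter> h \<noteq> {}"
proof -
  obtain l r where g': "l\<in>Lns" "r\<in>R l" "g = HL l r" using HL_cases[OF g] by blast
  obtain l' r' where h': "l'\<in>Lns" "r'\<in>R l'" "h = HL l' r'" using HL_cases[OF h] by blast
  show ?thesis
  proof (cases "l = l'")
    case True
    then have r': "r' \<in> R l" using h' by simp
    obtain P where P: "P \<in> pl l" "Arr l r P = Arr l r' P" using rows_agree[OF g'(1,2) r'] by blast
    obtain x where "x \<in> \<beta> P l (Arr l r P)" using slice_ne[OF _ g'(1) _ ArrS[OF g'(1,2) P(1)]] P by blast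
    then have "(P,x) \<in> g" "(P,x) \<in> h" using g' h' True P by (simp_all add: Hmem)
    then show ?thesis by blast
  next
    case False
    obtain P where P: "P\<in>Pts" "inc P l" "inc P l'" using meet_ex[OF g'(1) h'(1) False] by blast
    have c: "\<pi> P l \<noteq> \<pi> P l'" using inj_onD[OF bij_betw_imp_inj_on[OF PiB[OF P(1)]]] False P g'(1) h'(1) by blast
    obtain x where "x \<in> \<beta> P l (Arr l r P)" "x \<in> \<beta> P l' (Arr l' r' P)"
      using ex1_implies_ex[OF aff.meet1[OF aff_P[OF P(1)] pi_class[OF P(1) g'(1) P(2)] pi_class[OF P(1) h'(1) P(3)] c
         slice_class[OF P(1) g'(1) P(2) ArrS[OF g'(1,2)]] slice_class[OF P(1) h'(1) P(3) ArrS[OF h'(1,2)]]]] P by blast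
    then have "(P,x) \<in> g" "(P,x) \<in> h" using g' h' P by (simp_all add: Hmem)
    then show ?thesis by blast
  qed
qed

lemma pts_join: assumes p: "p \<in> Xh" and q: "q \<in> Xh" shows "\<exists>g\<in>Lh. p \<in> g \<and> q \<in> g"
proof -
  obtain P x where px: "p = (P,x)" "P\<in>Pts" "x \<in> X P" using Xh_cases[OF p] by blast
  obtain Q y where qy: "q = (Q,y)" "Q\<in>Pts" "y \<in> X Q" using Xh_cases[OF q] by blast
  show ?thesis
  proof (cases "P = Q")
    case PQ: True
    show ?thesis
    proof (cases "x = y")
      case True
      obtain l where l: "l \<in> Lns" "inc P l" using line_ex[OF px(2)] by blast
      obtain s where s: "s \<in> S l" "x \<in> \<beta> P l s" using cover[OF px(2) l px(3)] by blast
      obtain r where r: "r \<in> R l" "Arr l r P = s" using row_ex[OF l(1) _ s(1)] px(2) l(2) by blast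
      have "p \<in> HL l r" "q \<in> HL l r" using px qy PQ True l r s by (simp_all add: Hmem)
      moreover have "HL l r \<in> Lh" using l r Lh_iff by blast
      ultimately show ?thesis by blast
    next
      case False
      then show ?thesis using nb_same[OF px(2) px(3) _ False] qy(3) PQ px(1) qy(1) by blast
    qed
  next
    case False
    obtain l where l: "l\<in>Lns" "inc P l" "inc Q l" using join_ex[OF px(2) qy(2) False] by blast
    obtain s where s: "s \<in> S l" "x \<in> \<beta> P l s" using cover[OF px(2) l(1,2) px(3)] by blast
    obtain t where t: "t \<in> S l" "y \<in> \<beta> Q l t" using cover[OF qy(2) l(1,3) qy(3)] by blast
    obtain r where r: "r \<in> R l" "Arr l r P = s" "Arr l r Q = t"
      using oa_ex[OF l(1) _ _ False s(1) t(1)] px(2) qy(2) l by blast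
    have "p \<in> HL l r" "q \<in> HL l r" using px qy l r s t by (simp_all add: Hmem)
    moreover have "HL l r \<in> Lh" using l r Lh_iff by blast
    ultimately show ?thesis by blast
  qed
qed

lemma ln_nb_iff: assumes l: "l\<in>Lns" and r: "r\<in>R l" and l': "l'\<in>Lns" and r': "r'\<in>R l'"
  shows "ln_nb (HL l r) (HL l' r') = (l = l')"
proof
  assume nb: "ln_nb (HL l r) (HL l' r')"
  show "l = l'"
  proof (rule ccontr)
    assume ne: "l \<noteq> l'"
    then have "HL l r \<noteq> HL l' r'" using HL_inj[OF l l' r r'] by blast
    then obtain p q where pq: "p \<noteq> q" "p \<in> HL l r" "q \<in> HL l r" "p \<in> HL l' r'" "q \<in> HL l' r'"
      using nb unfolding ln_nb_def by blast
    obtain P x where px: "p = (P,x)" by (cases p)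
    obtain Q y where qy: "q = (Q,y)" by (cases q)
    have a: "P\<in>Pts" "inc P l" "inc P l'" "x \<in> \<beta> P l (Arr l r P)" "x \<in> \<beta> P l' (Arr l' r' P)"
      using pq px by (simp_all add: Hmem)
    have b: "Q\<in>Pts" "inc Q l" "inc Q l'" "y \<in> \<beta> Q l (Arr l r Q)" "y \<in> \<beta> Q l' (Arr l' r' Q)"
      using pq qy by (simp_all add: Hmem)
    have PQ: "P = Q" using meet_uniq[OF l l' ne a(1) b(1) a(2,3) b(2,3)] .
    have c: "\<pi> P l \<noteq> \<pi> P l'" using inj_onD[OF bij_betw_imp_inj_on[OF PiB[OF a(1)]]] ne a l l' by blast
    have "\<exists>!z. z \<in> \<beta> P l (Arr l r P) \<and> z \<in> \<beta> P l' (Arr l' r' P)"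
      using aff.meet1[OF aff_P[OF a(1)] pi_class[OF a(1) l a(2)] pi_class[OF a(1) l' a(3)] c
         slice_class[OF a(1) l a(2) ArrS[OF l r]] slice_class[OF a(1) l' a(3) ArrS[OF l' r']]] a by blast
    then have "x = y" using a b PQ by blast
    then show False using pq px qy PQ by simp
  qed
next
  assume ll: "l = l'"
  then have r'': "r' \<in> R l" using r' by simp
  obtain P where P: "P \<in> pl l" "Arr l r P = Arr l r' P" using rows_agree[OF l r r''] by blast
  obtain x y where xy: "x \<in> \<beta> P l (Arr l r P)" "y \<in> \<beta> P l (Arr l r P)" "x \<noteq> y"
    using aff.two_pts[OF aff_P slice_AL[OF _ l _ ArrS[OF l r P(1)]]] P by blast
  have "(P,x) \<in> HL l r" "(P,y) \<in> HL l r" "(P,x) \<in> HL l' r'" "(P,y) \<in> HL l' r'"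
    using xy P ll by (simp_all add: Hmem)
  then show "ln_nb (HL l r) (HL l' r')" unfolding ln_nb_def using xy(3) by blast
qed

definition x0 where "x0 P = (SOME x. x \<in> X P)"
definition f0 where "f0 P = (P, x0 P)"
definition \<phi>0 where "\<phi>0 p = f0 (fst p)"
definition \<psi>0 where "\<psi>0 G = f0 ` {P\<in>Pts. \<exists>x. (P,x) \<in> G}"

lemma inj_f0: "inj f0" by (rule injI) (simp add: f0_def)

lemma x0_in: "P \<in> Pts \<Longrightarrow> x0 P \<in> X P"
  unfolding x0_def using aff.Yne[OF aff_P] by (simp add: some_in_eq)

lemma psi_HL: assumes l: "l\<in>Lns" and r: "r\<in>R l" shows "\<psi>0 (HL l r) = f0 ` pl l"
proof -
  have "{P\<in>Pts. \<exists>x. (P,x) \<in> HL l r} = pl l" using HL_pl[OF l r] by blast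
  then show ?thesis unfolding \<psi>0_def by simp
qed

lemma R_ne: "l \<in> Lns \<Longrightarrow> \<exists>r. r \<in> R l"
proof -
  assume l: "l \<in> Lns"
  have "card (R l) \<noteq> 0" using cardR[OF l] m2 by simp
  then show ?thesis by (metis card.empty ex_in_conv)
qed

lemma PH: "PH_plane Xh Lh"
proof -
  have L1: "\<forall>g\<in>Lh. g \<subseteq> Xh"
  proof
    fix g assume g: "g \<in> Lh"
    obtain l r where lr: "l\<in>Lns" "r\<in>R l" "g = HL l r" using HL_cases[OF g] by blast
    then show "g \<subseteq> Xh" using HL_sub by simp
  qed
  have L2: "\<forall>p\<in>Xh. \<forall>q\<in>Xh. \<exists>g\<in>Lh. p \<in> g \<and> q \<in> g" using pts_join by blast
  have L3: "\<forall>g\<in>Lh. \<forall>h\<in>Lh. g \<inter> h \<noteq> {}" using lines_meet by blast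
  have im1: "\<phi>0 ` Xh = f0 ` Pts"
  proof
    show "\<phi>0 ` Xh \<subseteq> f0 ` Pts"
    proof
      fix z assume "z \<in> \<phi>0 ` Xh"
      then obtain p where p: "p \<in> Xh" "z = \<phi>0 p" by blast
      obtain P x where px: "p = (P,x)" "P\<in>Pts" "x \<in> X P" using Xh_cases[OF p(1)] by blast
      have "z = f0 P" using p(2) px(1) by (simp add: \<phi>0_def)
      then show "z \<in> f0 ` Pts" using px(2) by blast
    qed
    show "f0 ` Pts \<subseteq> \<phi>0 ` Xh"
    proof
      fix z assume "z \<in> f0 ` Pts"
      then obtain P where P: "P \<in> Pts" "z = f0 P" by blast
      have "(P, x0 P) \<in> Xh" using x0_in[OF P(1)] P by (simp add: Xh_iff)
      moreover have "\<phi>0 (P, x0 P) = z" using P by (simp add: \<phi>0_def)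
      ultimately show "z \<in> \<phi>0 ` Xh" by (metis image_eqI)
    qed
  qed
  have im2: "\<psi>0 ` Lh = (\<lambda>l. f0 ` pl l) ` Lns"
  proof
    show "\<psi>0 ` Lh \<subseteq> (\<lambda>l. f0 ` pl l) ` Lns"
    proof
      fix z assume "z \<in> \<psi>0 ` Lh"
      then obtain g where g: "g \<in> Lh" "z = \<psi>0 g" by blast
      obtain l r where lr: "l\<in>Lns" "r\<in>R l" "g = HL l r" using HL_cases[OF g(1)] by blast
      have "z = f0 ` pl l" using g(2) lr(3) psi_HL[OF lr(1,2)] by simp
      then show "z \<in> (\<lambda>l. f0 ` pl l) ` Lns" using lr(1) by blast
    qed
    show "(\<lambda>l. f0 ` pl l) ` Lns \<subseteq> \<psi>0 ` Lh"
    proof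
      fix z assume "z \<in> (\<lambda>l. f0 ` pl l) ` Lns"
      then obtain l where l: "l \<in> Lns" "z = f0 ` pl l" by blast
      obtain r where r: "r \<in> R l" using R_ne[OF l(1)] by blast
      have "HL l r \<in> Lh" using l r Lh_iff by blast
      moreover have "\<psi>0 (HL l r) = z" using psi_HL[OF l(1) r] l by simp
      ultimately show "z \<in> \<psi>0 ` Lh" by (metis image_eqI)
    qed
  qed
  have memf: "\<forall>p\<in>Pts. \<forall>l\<in>Lns. (f0 p \<in> f0 ` pl l) = inc p l"
  proof (intro ballI)
    fix p l assume p: "p \<in> Pts" and l: "l \<in> Lns"
    have "(f0 p \<in> f0 ` pl l) = (p \<in> pl l)" by (rule inj_image_mem_iff[OF inj_f0])
    then show "(f0 p \<in> f0 ` pl l) = inc p l" using p by simp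
  qed
  have injh: "inj_on (\<lambda>l. f0 ` pl l) Lns"
  proof (rule inj_onI)
    fix l l' assume "l \<in> Lns" "l' \<in> Lns" "f0 ` pl l = f0 ` pl l'"
    then have "pl l = pl l'" by (simp only: inj_image_eq_iff[OF inj_f0])
    then show "l = l'" by (rule pl_inj[OF \<open>l \<in> Lns\<close> \<open>l' \<in> Lns\<close>])
  qed
  have proj: "projective_plane (f0 ` Pts) ((\<lambda>l. f0 ` pl l) ` Lns) (\<in>)"
    using proj_transfer[OF pp inj_f0 injh memf] .
  have inc: "\<forall>p\<in>Xh. \<forall>g\<in>Lh. p \<in> g \<longrightarrow> \<phi>0 p \<in> \<psi>0 g"
  proof (intro ballI impI)
    fix p g assume p: "p \<in> Xh" and g: "g \<in> Lh" and pg: "p \<in> g"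
    obtain l r where lr: "l\<in>Lns" "r\<in>R l" "g = HL l r" using HL_cases[OF g] by blast
    obtain P x where px: "p = (P,x)" by (cases p)
    have "P \<in> pl l" using pg px lr by (simp add: Hmem)
    then show "\<phi>0 p \<in> \<psi>0 g" using psi_HL[OF lr(1,2)] lr(3) px by (simp add: \<phi>0_def)
  qed
  have nbp: "\<forall>p\<in>Xh. \<forall>q\<in>Xh. \<phi>0 p = \<phi>0 q \<longleftrightarrow> pt_nb Lh p q"
  proof (intro ballI)
    fix p q assume p: "p \<in> Xh" and q: "q \<in> Xh"
    have "(\<phi>0 p = \<phi>0 q) = (fst p = fst q)" unfolding \<phi>0_def by (rule inj_eq[OF inj_f0])
    then show "\<phi>0 p = \<phi>0 q \<longleftrightarrow> pt_nb Lh p q" using pt_nb_iff[OF p q] by simp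
  qed
  have nbl: "\<forall>g\<in>Lh. \<forall>h\<in>Lh. \<psi>0 g = \<psi>0 h \<longleftrightarrow> ln_nb g h"
  proof (intro ballI)
    fix g h assume g: "g \<in> Lh" and h: "h \<in> Lh"
    obtain l r where g': "l\<in>Lns" "r\<in>R l" "g = HL l r" using HL_cases[OF g] by blast
    obtain l' r' where h': "l'\<in>Lns" "r'\<in>R l'" "h = HL l' r'" using HL_cases[OF h] by blast
    have "\<psi>0 g = \<psi>0 h \<longleftrightarrow> l = l'"
      using psi_HL[OF g'(1,2)] psi_HL[OF h'(1,2)] g'(3) h'(3) inj_on_eq_iff[OF injh g'(1) h'(1)] by simp
    then show "\<psi>0 g = \<psi>0 h \<longleftrightarrow> ln_nb g h" using ln_nb_iff[OF g'(1,2) h'(1,2)] g'(3) h'(3) by simp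
  qed
  have "\<exists>(X' :: ('a\<times>'x) set) (L' :: ('a\<times>'x) set set) (inc' :: ('a\<times>'x) \<Rightarrow> ('a\<times>'x) set \<Rightarrow> bool)
        (\<phi> :: ('a\<times>'x) \<Rightarrow> ('a\<times>'x)) (\<psi> :: ('a\<times>'x) set \<Rightarrow> ('a\<times>'x) set).
        projective_plane X' L' inc' \<and> \<phi> ` Xh = X' \<and> \<psi> ` Lh = L' \<and>
        (\<forall>p\<in>Xh. \<forall>g\<in>Lh. p \<in> g \<longrightarrow> inc' (\<phi> p) (\<psi> g)) \<and>
        (\<forall>p\<in>Xh. \<forall>q\<in>Xh. \<phi> p = \<phi> q \<longleftrightarrow> pt_nb Lh p q) \<and>
        (\<forall>g\<in>Lh. \<forall>h\<in>Lh. \<psi> g = \<psi> h \<longleftrightarrow> ln_nb g h)"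
    apply (rule exI[where x="f0 ` Pts"], rule exI[where x="(\<lambda>l. f0 ` pl l) ` Lns"],
        rule exI[where x="(\<in>)"], rule exI[where x=\<phi>0], rule exI[where x=\<psi>0])
    using proj im1 im2 inc nbp nbl by (intro conjI)
  note ex = this
  show ?thesis unfolding PH_plane_def by (intro conjI L1 L2 L3 ex)
qed

lemma card_HL: "l\<in>Lns \<Longrightarrow> r\<in>R l \<Longrightarrow> finite (HL l r) \<and> card (HL l r) = m * (m + 1)"
proof -
  assume l: "l\<in>Lns" and r: "r\<in>R l"
  have fin: "\<forall>P\<in>pl l. finite (\<beta> P l (Arr l r P))" using slice_fin[OF _ l _ ArrS[OF l r]] by blast
  have cd: "\<forall>P\<in>pl l. card (\<beta> P l (Arr l r P)) = m" using slice_card[OF _ l _ ArrS[OF l r]] by blast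
  have "card (HL l r) = (\<Sum>P\<in>pl l. card (\<beta> P l (Arr l r P)))"
    unfolding HL_Sigma by (rule card_SigmaI[OF fin_pl[OF l] fin])
  also have "\<dots> = (m+1) * m" using cd card_pl[OF l] by simp
  finally have "card (HL l r) = m * (m + 1)" by simp
  moreover have "finite (HL l r)" unfolding HL_Sigma
    by (rule finite_SigmaI[OF fin_pl[OF l]]) (use fin in blast)
  ultimately show ?thesis by simp
qed

lemma nb_on_line: assumes l: "l\<in>Lns" and r: "r\<in>R l" and p: "p \<in> HL l r"
  shows "card {q\<in>HL l r. pt_nb Lh p q} = m"
proof -
  obtain P x where px: "p = (P,x)" by (cases p)
  have a: "P\<in>Pts" "inc P l" "x \<in> \<beta> P l (Arr l r P)" using p px by (simp_all add: Hmem)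
  have pX: "p \<in> Xh" using p HL_sub[OF l r] by blast
  have "{q\<in>HL l r. pt_nb Lh p q} = Pair P ` \<beta> P l (Arr l r P)"
  proof
    show "{q\<in>HL l r. pt_nb Lh p q} \<subseteq> Pair P ` \<beta> P l (Arr l r P)"
    proof
      fix q assume q: "q \<in> {q\<in>HL l r. pt_nb Lh p q}"
      obtain Q y where qy: "q = (Q,y)" by (cases q)
      have "q \<in> Xh" using q HL_sub[OF l r] by blast
      then have "Q = P" using q pt_nb_iff[OF pX] px qy by simp
      then show "q \<in> Pair P ` \<beta> P l (Arr l r P)" using q qy by (simp add: Hmem)
    qed
    show "Pair P ` \<beta> P l (Arr l r P) \<subseteq> {q\<in>HL l r. pt_nb Lh p q}"
    proof
      fix q assume "q \<in> Pair P ` \<beta> P l (Arr l r P)"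
      then obtain y where y: "y \<in> \<beta> P l (Arr l r P)" "q = (P,y)" by blast
      have qL: "q \<in> HL l r" using y a by (simp add: Hmem)
      then have "q \<in> Xh" using HL_sub[OF l r] by blast
      then have "pt_nb Lh p q" using pt_nb_iff[OF pX] px y(2) by simp
      then show "q \<in> {q\<in>HL l r. pt_nb Lh p q}" using qL by simp
    qed
  qed
  moreover have "Arr l r P \<in> S l" using ArrS[OF l r] a(1,2) by simp
  then have "card (\<beta> P l (Arr l r P)) = m" using slice_card[OF a(1) l a(2)] by simp
  moreover have "card (Pair P ` \<beta> P l (Arr l r P)) = card (\<beta> P l (Arr l r P))"
    by (rule card_image[OF inj_on_subset[OF inj_Pair[of P] subset_UNIV]])
  ultimately show ?thesis by simp
qed

lemma TR: "tr_PH_plane Xh Lh m m"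
  unfolding tr_PH_plane_def
proof (intro conjI PH ballI)
  fix g assume g: "g \<in> Lh"
  obtain l r where lr: "l\<in>Lns" "r\<in>R l" "g = HL l r" using HL_cases[OF g] by blast
  show "finite g" using card_HL[OF lr(1,2)] lr(3) by simp
  show "card g = m * (m + 1)" using card_HL[OF lr(1,2)] lr(3) by simp
  fix p assume "p \<in> g"
  then show "card {q \<in> g. pt_nb Lh p q} = m" using nb_on_line[OF lr(1,2)] lr(3) by simp
qed

lemma unif2: "uniform_PH 2 Xh Lh"
proof -
  have "\<forall>p\<in>Xh. uniform_AH (Suc 0) (nbhd_pts Xh Lh p) (nbhd_lines Xh Lh p) \<and> restriction_count_const Xh Lh p"
  proof
    fix p assume p: "p \<in> Xh"
    obtain P x where px: "p = (P,x)" "P\<in>Pts" "x \<in> X P" using Xh_cases[OF p] by blast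
    have u: "uniform_AH (Suc 0) (nbhd_pts Xh Lh p) (nbhd_lines Xh Lh p)"
      unfolding px(1) nbhd_pts_eq[OF px(2,3)] nbhd_lines_eq[OF px(2,3)]
    proof (simp only: uniform_AH.simps, intro conjI ballI)
      show "affine_plane (Pair P ` X P) ((`) (Pair P) ` AL P) (\<in>)"
        using aff.image_affine[OF aff_P[OF px(2)] inj_Pair] .
      fix g assume "g \<in> (`) (Pair P) ` AL P"
      then show "g \<subseteq> Pair P ` X P" using aff.sub[OF aff_P[OF px(2)]] by blast
    qed
    have "restriction_count_const Xh Lh p"
      unfolding restriction_count_const_def px(1) using count_restr[OF px(2,3)] by blast
    then show "uniform_AH (Suc 0) (nbhd_pts Xh Lh p) (nbhd_lines Xh Lh p) \<and> restriction_count_const Xh Lh p"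
      using u by blast
  qed
  then show ?thesis using PH by (simp add: numeral_2_eq_2)
qed

end

theorem mainTheorem1:
  fixes m :: nat
    and Pts :: "'a set" and Lns :: "'b set" and inc :: "'a \<Rightarrow> 'b \<Rightarrow> bool"
    and X :: "'a \<Rightarrow> 'x set" and AL :: "'a \<Rightarrow> 'x set set"
    and R :: "'b \<Rightarrow> 'r set" and S :: "'b \<Rightarrow> 's set" and Arr :: "'b \<Rightarrow> 'r \<Rightarrow> 'a \<Rightarrow> 's"
    and \<pi> :: "'a \<Rightarrow> 'b \<Rightarrow> 'x set set" and \<beta> :: "'a \<Rightarrow> 'b \<Rightarrow> 's \<Rightarrow> 'x set"
  assumes "m \<ge> 2"
    and "projective_plane_of_order Pts Lns inc m"
    and "\<forall>P\<in>Pts. affine_plane_of_order (X P) (AL P) m"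
    and "\<forall>l\<in>Lns. OA2 (R l) {P\<in>Pts. inc P l} (S l) (Arr l) m"
    and "\<forall>P\<in>Pts. bij_betw (\<pi> P) {l\<in>Lns. inc P l} (parallel_classes (X P) (AL P))"
    and "\<forall>P\<in>Pts. \<forall>l\<in>Lns. inc P l \<longrightarrow> bij_betw (\<beta> P l) (S l) (\<pi> P l)"
  shows "uniform_PH 2 (H_points Pts X) (H_lines Pts Lns inc R \<beta> Arr) \<and>
         tr_PH_plane (H_points Pts X) (H_lines Pts Lns inc R \<beta> Arr) m m"
proof -
  interpret c: constr m Pts Lns inc X AL R S Arr \<pi> \<beta> using assms by (simp add: constr_def)
  show ?thesis using c.unif2 c.TR by simp
qed

end
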